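(* Let $n\ge1$ be an integer and $V(x)=\frac{1}{2n}x^{2n}+\sum_{k=1}^{2n-1}\frac{a_k}{k}x^k$ with real coefficients $a_k$. Let $(\mu_t)_{t\ge0}$ be a family of probability measures on $\mathbb{R}$ solving, for all $f\in C_0^\infty(\mathbb{R})$, \[\frac{d}{dt}\int f\,d\mu_t=\frac12\iint\frac{f'(x)-f'(y)}{x-y}\mu_t(dx)\mu_t(dy)-\int V'(x)f'(x)\mu_t(dx).\] Assume that $\mu_t$ has finite moments up to order $2n+p-2$ for some $p\ge2$ and all $t\ge0$. Then there exists $M_p>0$ such that $m_p(t):=\int_{\mathbb{R}}|x|^p\mu_t(dx)\le M_p$ for all $t\ge0$. *)

theory Defs
  imports "HOL-Probability.Probability"
begin

definition V :: "nat \<Rightarrow> (nat \<Rightarrow> real) \<Rightarrow> real \<Rightarrow> real" where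
  "V n a x = x ^ (2*n) / real (2*n) + (\<Sum>k=1..2*n-1. a k / real k * x ^ k)"

definition smooth_compact :: "(real \<Rightarrow> real) \<Rightarrow> bool" where
  "smooth_compact f \<longleftrightarrow>
     (\<forall>k. \<forall>x. ((deriv ^^ k) f) differentiable (at x)) \<and>
     compact (closure {x. f x \<noteq> 0})"

text \<open>The kernel (f'(x)-f'(y))/(x-y), extended continuously on the diagonal by f''(x).\<close>
definition dq_kernel :: "(real \<Rightarrow> real) \<Rightarrow> real \<Rightarrow> real \<Rightarrow> real" where
  "dq_kernel f x y = (if x = y then deriv (deriv f) x
                      else (deriv f x - deriv f y) / (x - y))"

end

theory Submission
  imports Defs
begin

definition sm :: "(real \<Rightarrow> real) \<Rightarrow> bool" where
  "sm f \<longleftrightarrow> (\<forall>k x. ((deriv ^^ k) f) differentiable (at x))"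

lemma sm_coind:
  assumes "P f" and step: "\<And>h. P h \<Longrightarrow> (\<forall>x. h differentiable (at x)) \<and> P (deriv h)"
  shows "sm f"
proof -
  have "P ((deriv ^^ k) f)" for k
    by (induction k) (use assms in auto)
  then show ?thesis unfolding sm_def using step by blast
qed

lemma sm_diff: "sm f \<Longrightarrow> f differentiable (at x)"
  unfolding sm_def by (metis funpow_0)

lemma sm_deriv: "sm f \<Longrightarrow> sm (deriv f)"
  unfolding sm_def by (metis funpow_Suc_right comp_apply)

lemma sm_DERIV: "sm f \<Longrightarrow> (f has_real_derivative deriv f x) (at x)"
  using sm_diff DERIV_deriv_iff_real_differentiable by blast

lemma sm_cont: "sm f \<Longrightarrow> isCont f x"
  using sm_diff differentiable_imp_continuous_within by blast

lemma sm_unfold: "sm f \<longleftrightarrow> (\<forall>x. f differentiable (at x)) \<and> sm (deriv f)"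
  using sm_diff sm_deriv sm_coind[of "\<lambda>h. (\<forall>x. h differentiable (at x)) \<and> sm (deriv h)"]
  by (metis (no_types, lifting))

lemma deriv_ext: "(\<And>x. (f has_real_derivative f' x) (at x)) \<Longrightarrow> deriv f = f'"
  using DERIV_imp_deriv by blast

definition SP :: "((real \<Rightarrow> real) \<times> (real \<Rightarrow> real)) list \<Rightarrow> real \<Rightarrow> real" where
  "SP xs = (\<lambda>x. \<Sum>p\<leftarrow>xs. fst p x * snd p x)"

definition SPd :: "((real \<Rightarrow> real) \<times> (real \<Rightarrow> real)) list \<Rightarrow> ((real \<Rightarrow> real) \<times> (real \<Rightarrow> real)) list" where
  "SPd xs = concat (map (\<lambda>p. [(deriv (fst p), snd p), (fst p, deriv (snd p))]) xs)"

lemma SP_Nil[simp]: "SP [] = (\<lambda>x. 0)" by (simp add: SP_def)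
lemma SP_Cons[simp]: "SP (p # xs) x = fst p x * snd p x + SP xs x" by (simp add: SP_def)
lemma SPd_Nil[simp]: "SPd [] = []" by (simp add: SPd_def)
lemma SPd_Cons[simp]: "SPd (p # xs) = (deriv (fst p), snd p) # (fst p, deriv (snd p)) # SPd xs"
  by (simp add: SPd_def)

lemma SP_DERIV:
  assumes "\<forall>p\<in>set xs. sm (fst p) \<and> sm (snd p)"
  shows "(SP xs has_real_derivative SP (SPd xs) x) (at x)"
  using assms
proof (induction xs)
  case Nil
  then show ?case by (simp add: SP_def[symmetric])
next
  case (Cons p xs)
  have e: "SP (p # xs) = (\<lambda>x. fst p x * snd p x + SP xs x)" by (rule ext) simp
  have d1: "(fst p has_real_derivative deriv (fst p) x) (at x)" using Cons.prems sm_DERIV by auto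
  have d2: "(snd p has_real_derivative deriv (snd p) x) (at x)" using Cons.prems sm_DERIV by auto
  have "((\<lambda>x. fst p x * snd p x + SP xs x) has_real_derivative
     (deriv (fst p) x * snd p x + deriv (snd p) x * fst p x) + SP (SPd xs) x) (at x)"
    by (intro DERIV_add DERIV_mult[OF d1 d2] Cons.IH) (use Cons.prems in auto)
  then show ?case unfolding e by (simp add: algebra_simps)
qed

lemma SPd_sm: "\<forall>p\<in>set xs. sm (fst p) \<and> sm (snd p) \<Longrightarrow> \<forall>p\<in>set (SPd xs). sm (fst p) \<and> sm (snd p)"
  by (induction xs) (auto intro: sm_deriv)

lemma sm_SP: "\<forall>p\<in>set xs. sm (fst p) \<and> sm (snd p) \<Longrightarrow> sm (SP xs)"
proof (rule sm_coind[where P="\<lambda>h. \<exists>xs. (\<forall>p\<in>set xs. sm (fst p) \<and> sm (snd p)) \<and> h = SP xs"])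
  fix h assume "\<exists>xs. (\<forall>p\<in>set xs. sm (fst p) \<and> sm (snd p)) \<and> h = SP xs"
  then obtain ys where ys: "\<forall>p\<in>set ys. sm (fst p) \<and> sm (snd p)" "h = SP ys" by blast
  have "deriv h = SP (SPd ys)" using SP_DERIV[OF ys(1)] ys(2) by (intro deriv_ext) auto
  then show "(\<forall>x. h differentiable (at x)) \<and> (\<exists>xs. (\<forall>p\<in>set xs. sm (fst p) \<and> sm (snd p)) \<and> deriv h = SP xs)"
    using SP_DERIV[OF ys(1)] ys SPd_sm[OF ys(1)] real_differentiable_def by blast
qed auto

lemma sm_const: "sm (\<lambda>x. c)"
  by (rule sm_coind[where P="\<lambda>h. \<exists>c. h = (\<lambda>x. c)"]) auto

lemma sm_mult: "sm f \<Longrightarrow> sm g \<Longrightarrow> sm (\<lambda>x. f x * g x)"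
  using sm_SP[of "[(f,g)]"] by (simp add: SP_def)

lemma sm_add: "sm f \<Longrightarrow> sm g \<Longrightarrow> sm (\<lambda>x. f x + g x)"
  using sm_SP[of "[(f,\<lambda>x. 1),(g,\<lambda>x. 1)]"] sm_const by (simp add: SP_def)

lemma sm_cmult: "sm f \<Longrightarrow> sm (\<lambda>x. c * f x)"
  using sm_mult[OF sm_const] by blast

lemma sm_diff_fun: "sm f \<Longrightarrow> sm g \<Longrightarrow> sm (\<lambda>x. f x - g x)"
  using sm_add[of f "\<lambda>x. (-1) * g x"] sm_cmult[of g "-1"] by simp

lemma sm_poly: "sm (\<lambda>x. poly P x)"
proof (rule sm_coind[where P="\<lambda>h. \<exists>P::real poly. h = (\<lambda>x. poly P x)"])
  fix h :: "real \<Rightarrow> real" assume "\<exists>P::real poly. h = (\<lambda>x. poly P x)"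
  then obtain P where P: "h = (\<lambda>x. poly P x)" by blast
  have "deriv h = (\<lambda>x. poly (pderiv P) x)" unfolding P
    by (intro deriv_ext) (rule poly_DERIV)
  then show "(\<forall>x. h differentiable (at x)) \<and> (\<exists>P. deriv h = (\<lambda>x. poly P x))"
    using P poly_DERIV real_differentiable_def by blast
qed auto

lemma sm_id: "sm (\<lambda>x. x)"
  using sm_poly[of "[:0,1:]"] by simp

lemma sm_compose:
  assumes g: "sm g" and f: "sm f"
  shows "sm (\<lambda>x. f (g x))"
proof -
  define Q where "Q = (\<lambda>h::real\<Rightarrow>real. \<exists>xs::((real \<Rightarrow> real) \<times> (real \<Rightarrow> real)) list. (\<forall>p\<in>set xs. sm (fst p) \<and> sm (snd p)) \<and> h = (\<lambda>x. \<Sum>p\<leftarrow>xs. fst p (g x) * snd p x))"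
  define D where "D = (\<lambda>xs::((real \<Rightarrow> real) \<times> (real \<Rightarrow> real)) list. concat (map (\<lambda>p. [(deriv (fst p), \<lambda>x. deriv g x * snd p x), (fst p, deriv (snd p))]) xs))"
  have DER: "((\<lambda>x. \<Sum>p\<leftarrow>xs. fst p (g x) * snd p x) has_real_derivative (\<Sum>p\<leftarrow>D xs. fst p (g x) * snd p x)) (at x)"
    if "\<forall>p\<in>set xs. sm (fst p) \<and> sm (snd p)" for xs x
    using that
  proof (induction xs)
    case Nil
    then show ?case by (simp add: D_def)
  next
    case (Cons p xs)
    have d1: "(fst p has_real_derivative deriv (fst p) (g x)) (at (g x))" using Cons.prems sm_DERIV by auto
    have d2: "(snd p has_real_derivative deriv (snd p) x) (at x)" using Cons.prems sm_DERIV by auto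
    have d3: "(g has_real_derivative deriv g x) (at x)" using g sm_DERIV by auto
    have "((\<lambda>x. fst p (g x) * snd p x + (\<Sum>p\<leftarrow>xs. fst p (g x) * snd p x)) has_real_derivative
      (deriv (fst p) (g x) * deriv g x * snd p x + deriv (snd p) x * fst p (g x)) + (\<Sum>p\<leftarrow>D xs. fst p (g x) * snd p x)) (at x)"
      by (intro DERIV_add DERIV_mult[OF DERIV_chain2[OF d1 d3] d2] Cons.IH) (use Cons.prems in auto)
    then show ?case by (simp add: D_def algebra_simps)
  qed
  have "Q (\<lambda>x. f (g x))"
    unfolding Q_def by (rule exI[of _ "[(f, \<lambda>x. 1)]"]) (simp add: f sm_const)
  then show ?thesis
  proof (rule sm_coind)
    fix h assume "Q h"
    then obtain xs where xs: "\<forall>p\<in>set xs. sm (fst p) \<and> sm (snd p)" "h = (\<lambda>x. \<Sum>p\<leftarrow>xs. fst p (g x) * snd p x)"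
      unfolding Q_def by blast
    have "deriv h = (\<lambda>x. \<Sum>p\<leftarrow>D xs. fst p (g x) * snd p x)"
      using DER[OF xs(1)] xs(2) by (intro deriv_ext) auto
    moreover have "\<forall>p\<in>set (D xs). sm (fst p) \<and> sm (snd p)"
      using xs(1) by (auto simp: D_def intro: sm_deriv sm_mult g)
    ultimately show "(\<forall>x. h differentiable (at x)) \<and> Q (deriv h)"
      using DER[OF xs(1)] xs(2) real_differentiable_def unfolding Q_def by blast
  qed
qed

definition Hf :: "real poly \<Rightarrow> real \<Rightarrow> real" where
  "Hf P y = (if y > 0 then poly P (1/y) * exp (-(1/y)) else 0)"

lemma poly_exp_lim: "((\<lambda>t::real. poly (P::real poly) t * exp (-t)) \<longlongrightarrow> 0) at_top"
proof -
  have "((\<lambda>t. \<Sum>i\<le>degree P. coeff P i * (t ^ i / exp t)) \<longlongrightarrow> (\<Sum>i\<le>degree P. coeff P i * 0)) at_top"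
    by (intro tendsto_sum tendsto_mult tendsto_const tendsto_power_div_exp_0)
  then show ?thesis
    by (simp add: poly_altdef exp_minus field_simps sum_divide_distrib)
qed

lemma Hf_right: "((\<lambda>y. Hf P y / y) \<longlongrightarrow> 0) (at_right 0)"
proof -
  have "((\<lambda>y. poly (pCons 0 P) (1/y) * exp (-(1/y))) \<longlongrightarrow> 0) (at_right 0)"
    using filterlim_compose[OF poly_exp_lim[of "pCons 0 P"] filterlim_inverse_at_top_right]
    by (simp add: o_def inverse_eq_divide)
  moreover have "eventually (\<lambda>y. poly (pCons 0 P) (1/y) * exp (-(1/y)) = Hf P y / y) (at_right 0)"
    unfolding eventually_at_filter
    by (rule always_eventually) (auto simp: Hf_def field_simps)
  ultimately show ?thesis by (rule Lim_transform_eventually)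
qed

lemma Hf_left: "((\<lambda>y. Hf P y / y) \<longlongrightarrow> 0) (at_left 0)"
proof -
  have "eventually (\<lambda>y. 0 = Hf P y / y) (at_left (0::real))"
    unfolding eventually_at_filter
    by (rule always_eventually) (auto simp: Hf_def)
  then show ?thesis by (rule Lim_transform_eventually[OF tendsto_const])
qed

definition Hd :: "real poly \<Rightarrow> real poly" where
  "Hd P = [:0,0,1:] * (P - pderiv P)"

lemma Hf_DERIV: "(Hf P has_real_derivative Hf (Hd P) y) (at y)"
proof (cases "y > 0")
  case True
  have d: "((\<lambda>y. poly P (1/y) * exp (-(1/y))) has_real_derivative
      poly (pderiv P) (1/y) * (-(1/y^2)) * exp (-(1/y)) + exp (-(1/y)) * (1/y^2) * poly P (1/y)) (at y)"
  proof -
    have i: "((\<lambda>y. 1/y) has_real_derivative (-(1/y^2))) (at y)"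
      using True DERIV_inverse[of y] by (simp add: inverse_eq_divide power2_eq_square)
    have a: "((\<lambda>y. poly P (1/y)) has_real_derivative poly (pderiv P) (1/y) * (-(1/y^2))) (at y)"
      by (rule DERIV_chain2[OF poly_DERIV i])
    have b: "((\<lambda>y. exp (-(1/y))) has_real_derivative exp (-(1/y)) * (1/y^2)) (at y)"
      using DERIV_chain2[OF DERIV_exp DERIV_minus[OF i]] by simp
    show ?thesis using DERIV_mult[OF a b] by (simp add: algebra_simps)
  qed
  have "(Hf P has_real_derivative poly (pderiv P) (1/y) * (-(1/y^2)) * exp (-(1/y)) + exp (-(1/y)) * (1/y^2) * poly P (1/y)) (at y)"
    by (rule has_field_derivative_transform_within_open[OF d, of "{0<..}"]) (use True in \<open>auto simp: Hf_def\<close>)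
  moreover have "poly (pderiv P) (1/y) * (-(1/y^2)) * exp (-(1/y)) + exp (-(1/y)) * (1/y^2) * poly P (1/y) = Hf (Hd P) y"
    using True by (simp add: Hf_def Hd_def algebra_simps power2_eq_square)
  ultimately show ?thesis by simp
next
  case False
  show ?thesis
  proof (cases "y < 0")
    case True
    have "(Hf P has_real_derivative 0) (at y)"
      by (rule has_field_derivative_transform_within_open[OF DERIV_const, of "{..<0}"]) (use True in \<open>auto simp: Hf_def\<close>)
    then show ?thesis using True by (simp add: Hf_def)
  next
    case False
    then have y: "y = 0" using \<open>\<not> y > 0\<close> by simp
    have "((\<lambda>z. (Hf P z - Hf P 0) / (z - 0)) \<longlongrightarrow> 0) (at 0)"
      using filterlim_split_at[OF Hf_left Hf_right] by (simp add: Hf_def)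
    then show ?thesis unfolding y by (simp add: has_field_derivative_iff Hf_def)
  qed
qed

lemma sm_Hf: "sm (Hf P)"
proof (rule sm_coind[where P="\<lambda>h. \<exists>P. h = Hf P"])
  fix h assume "\<exists>P. h = Hf P"
  then obtain P where P: "h = Hf P" by blast
  have "deriv h = Hf (Hd P)" unfolding P by (intro deriv_ext Hf_DERIV)
  then show "(\<forall>x. h differentiable (at x)) \<and> (\<exists>P. deriv h = Hf P)"
    using P Hf_DERIV real_differentiable_def by blast
qed auto

definition H :: "real \<Rightarrow> real" where "H = Hf 1"

lemma H_eq: "H y = (if y > 0 then exp (-(1/y)) else 0)"
  by (simp add: H_def Hf_def)

lemma sm_H: "sm H" unfolding H_def by (rule sm_Hf)

lemma H_nonneg: "H y \<ge> 0" by (simp add: H_eq)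

lemma H_mono: "a \<le> b \<Longrightarrow> H a \<le> H b"
  by (auto simp: H_eq divide_simps)

lemma H_pos: "y > 0 \<Longrightarrow> H y > 0" by (simp add: H_eq)

definition chi :: "real \<Rightarrow> real" where
  "chi x = exp 1 * H (1 - H (x^2 - 1) / H 3)"

lemma sm_chi: "sm chi"
proof -
  have "sm (\<lambda>x. H (x^2 - 1))"
    using sm_compose[OF sm_poly[of "[:-1,0,1:]"] sm_H] by (simp add: algebra_simps power2_eq_square)
  then have "sm (\<lambda>x. 1 - (1 / H 3) * H (x^2 - 1))"
    by (intro sm_diff_fun sm_const sm_cmult)
  then have "sm (\<lambda>x. H (1 - (1 / H 3) * H (x^2 - 1)))"
    by (rule sm_compose[OF _ sm_H])
  then show ?thesis unfolding chi_def[abs_def] by (intro sm_cmult) simp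
qed

lemma H3: "H 3 > 0" by (rule H_pos) simp

lemma chi_one: "x^2 \<le> 1 \<Longrightarrow> chi x = 1"
  by (simp add: chi_def H_eq exp_minus)

lemma chi_zero: "x^2 \<ge> 4 \<Longrightarrow> chi x = 0"
proof -
  assume "x^2 \<ge> 4"
  then have "H 3 \<le> H (x^2 - 1)" by (intro H_mono) simp
  then have "1 - H (x^2 - 1) / H 3 \<le> 0" using H3 by (simp add: field_simps)
  then show ?thesis by (simp add: chi_def H_eq)
qed

lemma chi_nonneg: "chi x \<ge> 0"
  by (simp add: chi_def H_nonneg)

lemma chi_mono: "x^2 \<le> y^2 \<Longrightarrow> chi y \<le> chi x"
proof -
  assume "x^2 \<le> y^2"
  then have "H (x^2 - 1) \<le> H (y^2 - 1)" by (intro H_mono) simp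
  then have "1 - H (y^2 - 1) / H 3 \<le> 1 - H (x^2 - 1) / H 3" using H3 by (simp add: field_simps)
  then show ?thesis unfolding chi_def by (intro mult_left_mono H_mono) auto
qed

lemma chi_le1: "chi x \<le> 1"
  using chi_mono[of 0 x] chi_one[of 0] by simp

definition chi1 :: "real \<Rightarrow> real" where "chi1 = deriv chi"
definition chi2 :: "real \<Rightarrow> real" where "chi2 = deriv chi1"

lemma sm_chi1: "sm chi1" unfolding chi1_def by (rule sm_deriv[OF sm_chi])
lemma sm_chi2: "sm chi2" unfolding chi2_def by (rule sm_deriv[OF sm_chi1])

lemma chi_DERIV: "(chi has_real_derivative chi1 y) (at y)"
  unfolding chi1_def by (rule sm_DERIV[OF sm_chi])
lemma chi1_DERIV: "(chi1 has_real_derivative chi2 y) (at y)"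
  unfolding chi2_def by (rule sm_DERIV[OF sm_chi1])

lemma deriv_locconst:
  fixes f :: "real \<Rightarrow> real"
  assumes "open S" "y \<in> S" "\<And>z. z \<in> S \<Longrightarrow> f z = c"
  shows "deriv f y = 0"
proof -
  have "(f has_real_derivative 0) (at y)"
    by (rule has_field_derivative_transform_within_open[OF DERIV_const[of c] assms(1,2)]) (use assms(3) in auto)
  then show ?thesis by (rule DERIV_imp_deriv)
qed

lemma open_in1: "open {y::real. \<bar>y\<bar> < 1}"
  by (rule open_Collect_less) (auto intro: continuous_intros)
lemma open_out2: "open {y::real. 2 < \<bar>y\<bar>}"
  by (rule open_Collect_less) (auto intro: continuous_intros)

lemma chi1_in: "\<bar>y\<bar> < 1 \<Longrightarrow> chi1 y = 0"
  unfolding chi1_def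
  by (rule deriv_locconst[OF open_in1, of y chi 1]) (auto intro!: chi_one simp: abs_square_le_1)

lemma chi1_out: "\<bar>y\<bar> > 2 \<Longrightarrow> chi1 y = 0"
proof -
  have "z^2 \<ge> 4" if "2 < \<bar>z\<bar>" for z::real
  proof -
    have "(2::real)^2 \<le> \<bar>z\<bar>^2" using that by (intro power_mono) auto
    then show ?thesis by simp
  qed
  then show "\<bar>y\<bar> > 2 \<Longrightarrow> chi1 y = 0"
    unfolding chi1_def by (intro deriv_locconst[OF open_out2, of y chi 0]) (auto intro!: chi_zero)
qed

lemma chi2_in: "\<bar>y\<bar> < 1 \<Longrightarrow> chi2 y = 0"
  unfolding chi2_def by (rule deriv_locconst[OF open_in1, of y chi1 0]) (auto intro!: chi1_in)

lemma chi2_out: "\<bar>y\<bar> > 2 \<Longrightarrow> chi2 y = 0"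
  unfolding chi2_def by (rule deriv_locconst[OF open_out2, of y chi1 0]) (auto intro!: chi1_out)

lemma chi1_sign: "y * chi1 y \<le> 0"
proof (cases "y > 0")
  case True
  show ?thesis
  proof (rule ccontr)
    assume "\<not> ?thesis"
    then have "chi1 y > 0" using True by (metis mult_le_0_iff not_le less_imp_le)
    from DERIV_pos_inc_right[OF chi_DERIV this] obtain d where d: "d > 0" "\<And>h. h > 0 \<Longrightarrow> h < d \<Longrightarrow> chi y < chi (y + h)"
      by blast
    have "chi (y + d/2) \<le> chi y" using True d by (intro chi_mono power_mono) auto
    with d(2)[of "d/2"] d(1) show False by simp
  qed
next
  case False
  show ?thesis
  proof (cases "y < 0")
    case True
    show ?thesis
    proof (rule ccontr)
      assume "\<not> ?thesis"
      then have "chi1 y < 0" using True by (metis mult_le_0_iff not_le less_imp_le)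
      from DERIV_neg_dec_left[OF chi_DERIV this] obtain d where d: "d > 0" "\<And>h. h > 0 \<Longrightarrow> h < d \<Longrightarrow> chi y < chi (y - h)"
        by blast
      have "y^2 \<le> (y - d/2)^2"
      proof -
        have "\<bar>y\<bar> \<le> \<bar>y - d/2\<bar>" using True d by auto
        then have "\<bar>y\<bar>^2 \<le> \<bar>y - d/2\<bar>^2" by (intro power_mono) auto
        then show ?thesis by simp
      qed
      then have "chi (y - d/2) \<le> chi y" by (rule chi_mono)
      with d(2)[of "d/2"] d(1) show False by simp
    qed
  next
    case False
    then show ?thesis using \<open>\<not> y > 0\<close> by simp
  qed
qed

lemma sm_bounded_supp:
  assumes "sm f" "\<And>y. \<bar>y\<bar> > 2 \<Longrightarrow> f y = 0"
  shows "\<exists>B. \<forall>y. \<bar>f y\<bar> \<le> B"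
proof -
  have "continuous_on {-2..2} f"
    using sm_cont[OF assms(1)] by (intro continuous_at_imp_continuous_on) auto
  then have "bounded (f ` {-2..2})"
    by (intro compact_imp_bounded compact_continuous_image compact_Icc)
  then obtain B where B: "\<And>y. y \<in> {-2..2} \<Longrightarrow> \<bar>f y\<bar> \<le> B"
    unfolding bounded_iff by (metis image_eqI real_norm_def)
  have "\<bar>f y\<bar> \<le> max B 0" for y
  proof (cases "\<bar>y\<bar> > 2")
    case True then show ?thesis using assms(2) by simp
  next
    case False then have "y \<in> {-2..2}" by auto
    then show ?thesis using B[of y] by linarith
  qed
  then show ?thesis by blast
qed

lemma chi1_bound: "\<exists>B. \<forall>y. \<bar>chi1 y\<bar> \<le> B"
  by (rule sm_bounded_supp[OF sm_chi1 chi1_out])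
lemma chi2_bound: "\<exists>B. \<forall>y. \<bar>chi2 y\<bar> \<le> B"
  by (rule sm_bounded_supp[OF sm_chi2 chi2_out])

definition w :: "real \<Rightarrow> real" where "w x = 1 + x^2"
definition gg :: "real \<Rightarrow> real \<Rightarrow> real" where "gg r x = w x powr r"
definition g1 :: "real \<Rightarrow> real \<Rightarrow> real" where "g1 r x = 2 * r * x * w x powr (r - 1)"
definition g2 :: "real \<Rightarrow> real \<Rightarrow> real" where
  "g2 r x = 2 * r * w x powr (r - 1) + 4 * r * (r - 1) * x^2 * w x powr (r - 2)"

lemma w_pos: "w x > 0" unfolding w_def by (simp add: add_pos_nonneg)
lemma w_ge1: "w x \<ge> 1" unfolding w_def by simp
lemma w_DERIV: "(w has_real_derivative 2 * x) (at x)"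
  unfolding w_def[abs_def] by (auto intro!: derivative_eq_intros)

lemma powr_DERIV_w: "((\<lambda>x. w x powr s) has_real_derivative s * w x powr (s - 1) * (2 * x)) (at x)"
  using DERIV_fun_powr[OF w_DERIV w_pos] by simp

lemma gg_DERIV: "(gg r has_real_derivative g1 r x) (at x)"
  using powr_DERIV_w[of r x] unfolding gg_def[abs_def] g1_def by (simp add: algebra_simps)

lemma g1_DERIV: "(g1 r has_real_derivative g2 r x) (at x)"
proof -
  have "((\<lambda>x. (2 * r * x) * w x powr (r - 1)) has_real_derivative
      (2 * r) * w x powr (r - 1) + ((r - 1) * w x powr (r - 1 - 1) * (2 * x)) * (2 * r * x)) (at x)"
    by (intro DERIV_mult powr_DERIV_w) (auto intro!: derivative_eq_intros)
  then show ?thesis unfolding g1_def[abs_def] g2_def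
    by (simp add: algebra_simps power2_eq_square)
qed

lemma gg_nonneg: "gg r x \<ge> 0" by (simp add: gg_def)

lemma aux_alg:
  fixes W Wm G A B x r m :: real
  assumes "W > 0" "Wm > 0"
  shows "(A * inverse Wm + (- (m * (2 * x)) / (W * Wm)) * B) * G + (2 * r * x / W * G) * (B * inverse Wm)
     = (A * W + (2 * r - 2 * m) * x * B) / (W * Wm) * G"
  using assms by (simp add: field_simps)

lemma sm_gg: "sm (gg r)"
proof -
  define Q where "Q = (\<lambda>h::real\<Rightarrow>real. \<exists>P::real poly. \<exists>m::nat. h = (\<lambda>x. poly P x / w x ^ m * gg r x))"
  have D: "((\<lambda>x. poly P x / w x ^ m * gg r x) has_real_derivative
     poly (pderiv P * [:1,0,1:] + smult (2 * r - 2 * real m) ([:0,1:] * P)) x / w x ^ (Suc m) * gg r x) (at x)" for P m x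
  proof -
    have i: "((\<lambda>x. inverse (w x ^ m)) has_real_derivative - (real m * w x ^ (m - 1) * (2 * x)) / (w x ^ m)^2) (at x)"
      using DERIV_inverse_fun[OF DERIV_chain2[OF DERIV_pow w_DERIV, of m x]] w_pos[of x]
      by (simp add: divide_inverse power2_eq_square)
    have "((\<lambda>x. (poly P x * inverse (w x ^ m)) * gg r x) has_real_derivative
       (poly (pderiv P) x * inverse (w x ^ m) + (- (real m * w x ^ (m - 1) * (2 * x)) / (w x ^ m)^2) * poly P x) * gg r x
       + g1 r x * (poly P x * inverse (w x ^ m))) (at x)"
      by (intro DERIV_mult poly_DERIV i gg_DERIV)
    moreover have e1: "g1 r x = 2 * r * x / w x * gg r x"
      unfolding g1_def gg_def using w_pos[of x] by (simp add: powr_diff)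
    moreover have e2: "(- (real m * w x ^ (m - 1) * (2 * x)) / (w x ^ m)^2) = - (real m * (2 * x)) / w x ^ Suc m"
    proof (cases m)
      case 0 then show ?thesis by simp
    next
      case (Suc k) then show ?thesis using w_pos[of x] by (simp add: field_simps power2_eq_square)
    qed
    ultimately have d: "((\<lambda>x. (poly P x * inverse (w x ^ m)) * gg r x) has_real_derivative
       (poly (pderiv P) x * inverse (w x ^ m) + (- (real m * (2 * x)) / w x ^ Suc m) * poly P x) * gg r x
       + (2 * r * x / w x * gg r x) * (poly P x * inverse (w x ^ m))) (at x)"
      by (simp only: e1 e2)
    have wx: "w x = 1 + x^2" by (simp add: w_def)
    have e: "(poly (pderiv P) x * inverse (w x ^ m) + (- (real m * (2 * x)) / w x ^ Suc m) * poly P x) * gg r x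
       + (2 * r * x / w x * gg r x) * (poly P x * inverse (w x ^ m)) =
       poly (pderiv P * [:1,0,1:] + smult (2 * r - 2 * real m) ([:0,1:] * P)) x / w x ^ (Suc m) * gg r x"
    proof -
      have "poly (pderiv P * [:1,0,1:] + smult (2 * r - 2 * real m) ([:0,1:] * P)) x
          = poly (pderiv P) x * (1 + x^2) + (2 * r - 2 * real m) * x * poly P x"
        by (simp add: algebra_simps power2_eq_square)
      then show ?thesis
        using aux_alg[OF w_pos[of x], of "w x ^ m" "poly (pderiv P) x" "real m" x "poly P x" "gg r x" r] w_pos[of x]
        by (simp add: wx)
    qed
    show ?thesis using d unfolding e by (simp add: divide_inverse)
  qed
  have "Q (gg r)" unfolding Q_def by (rule exI[of _ 1], rule exI[of _ 0]) simp
  then show ?thesis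
  proof (rule sm_coind)
    fix h assume "Q h"
    then obtain P m where h: "h = (\<lambda>x. poly P x / w x ^ m * gg r x)" unfolding Q_def by blast
    have "deriv h = (\<lambda>x. poly (pderiv P * [:1,0,1:] + smult (2 * r - 2 * real m) ([:0,1:] * P)) x / w x ^ (Suc m) * gg r x)"
      unfolding h by (intro deriv_ext D)
    then show "(\<forall>x. h differentiable (at x)) \<and> Q (deriv h)"
      unfolding Q_def using D h real_differentiable_def by blast
  qed
qed

lemma g2_bound:
  assumes "r \<ge> 1"
  shows "\<bar>g2 r x\<bar> \<le> (2 * r + 4 * r * (r - 1)) * w x powr (r - 1)"
proof -
  have "x^2 * w x powr (r - 2) \<le> w x powr (r - 1)"
  proof -
    have "x^2 * w x powr (r - 2) \<le> w x * w x powr (r - 2)"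
      by (intro mult_right_mono) (auto simp: w_def)
    also have "\<dots> = w x powr 1 * w x powr (r - 2)"
      using w_pos[of x] by simp
    also have "\<dots> = w x powr (1 + (r - 2))"
      by (rule powr_add[symmetric])
    also have "\<dots> = w x powr (r - 1)" by simp
    finally show ?thesis .
  qed
  moreover have "0 \<le> x^2 * w x powr (r - 2)" by simp
  ultimately have "\<bar>4 * r * (r - 1) * x^2 * w x powr (r - 2)\<bar> \<le> 4 * r * (r - 1) * w x powr (r - 1)"
    using assms by (simp add: abs_mult mult.assoc mult_left_mono)
  moreover have "\<bar>2 * r * w x powr (r - 1)\<bar> = 2 * r * w x powr (r - 1)" using assms by simp
  ultimately have "\<bar>2 * r * w x powr (r - 1)\<bar> + \<bar>4 * r * (r - 1) * x^2 * w x powr (r - 2)\<bar>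
     \<le> (2 * r + 4 * r * (r - 1)) * w x powr (r - 1)" by (simp add: algebra_simps)
  then show ?thesis unfolding g2_def by (rule order_trans[OF abs_triangle_ineq])
qed

definition fL :: "real \<Rightarrow> real \<Rightarrow> real \<Rightarrow> real \<Rightarrow> real" where
  "fL r c L x = (gg r x - c) * chi (x / L)"
definition fL1 :: "real \<Rightarrow> real \<Rightarrow> real \<Rightarrow> real \<Rightarrow> real" where
  "fL1 r c L x = g1 r x * chi (x / L) + (gg r x - c) * chi1 (x / L) / L"
definition fL2 :: "real \<Rightarrow> real \<Rightarrow> real \<Rightarrow> real \<Rightarrow> real" where
  "fL2 r c L x = g2 r x * chi (x / L) + 2 * g1 r x * chi1 (x / L) / L + (gg r x - c) * chi2 (x / L) / L^2"

lemma scale_DERIV: "((\<lambda>x. x / L) has_real_derivative 1 / L) (at x)"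
  using DERIV_cdivide[OF DERIV_ident, of L x] by simp

lemma fL_DERIV: assumes L: "L > 0" shows "(fL r c L has_real_derivative fL1 r c L x) (at x)"
proof -
  have "((\<lambda>x. (gg r x - c) * chi (x / L)) has_real_derivative
     (g1 r x - 0) * chi (x / L) + (chi1 (x / L) * (1 / L)) * (gg r x - c)) (at x)"
    by (intro DERIV_mult DERIV_diff gg_DERIV DERIV_const DERIV_chain2[OF chi_DERIV scale_DERIV])
  then show ?thesis unfolding fL_def[abs_def] fL1_def using L by (simp add: field_simps)
qed

lemma fL1_DERIV: assumes L: "L > 0" shows "(fL1 r c L has_real_derivative fL2 r c L x) (at x)"
proof -
  have "((\<lambda>x. g1 r x * chi (x / L) + (gg r x - c) * chi1 (x / L) / L) has_real_derivative
     (g2 r x * chi (x / L) + (chi1 (x / L) * (1 / L)) * g1 r x) +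
     ((g1 r x - 0) * chi1 (x / L) + (chi2 (x / L) * (1 / L)) * (gg r x - c)) / L) (at x)"
    by (intro DERIV_add DERIV_mult DERIV_diff DERIV_cdivide gg_DERIV g1_DERIV DERIV_const
          DERIV_chain2[OF chi_DERIV scale_DERIV] DERIV_chain2[OF chi1_DERIV scale_DERIV])
  then show ?thesis unfolding fL1_def[abs_def] fL2_def using L by (simp add: field_simps power2_eq_square)
qed

lemma deriv_fL: "L > 0 \<Longrightarrow> deriv (fL r c L) = fL1 r c L"
  by (intro deriv_ext fL_DERIV) auto
lemma deriv_fL1: "L > 0 \<Longrightarrow> deriv (fL1 r c L) = fL2 r c L"
  by (intro deriv_ext fL1_DERIV) auto

lemma sm_scale: "sm (\<lambda>x. f (x / L))" if "sm f"
  using sm_compose[OF sm_poly[of "[:0, 1/L:]"] that] by (simp add: divide_inverse mult.commute)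

lemma sm_fL: "sm (fL r c L)"
  unfolding fL_def[abs_def]
  by (intro sm_mult sm_diff_fun sm_gg sm_const sm_scale sm_chi)

lemma smooth_compact_of:
  assumes "sm f" "\<And>x. \<bar>x\<bar> > R \<Longrightarrow> f x = 0"
  shows "smooth_compact f"
proof -
  have "{x. f x \<noteq> 0} \<subseteq> cball 0 R" using assms(2) by (force simp: not_less)
  then have "bounded {x. f x \<noteq> 0}" by (rule bounded_subset[OF bounded_cball])
  then have "compact (closure {x. f x \<noteq> 0})" by (simp add: compact_closure)
  then show ?thesis using assms(1) unfolding smooth_compact_def sm_def by blast
qed

lemma chi_out: "\<bar>y\<bar> \<ge> 2 \<Longrightarrow> chi y = 0"
proof -
  assume "\<bar>y\<bar> \<ge> 2"
  then have "(2::real)^2 \<le> \<bar>y\<bar>^2" by (intro power_mono) auto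
  then show ?thesis by (intro chi_zero) simp
qed

lemma chi_in: "\<bar>y\<bar> \<le> 1 \<Longrightarrow> chi y = 1"
  by (intro chi_one) (simp add: abs_square_le_1)

lemma scaled_out: "(L::real) > 0 \<Longrightarrow> \<bar>x\<bar> > 2 * L \<Longrightarrow> \<bar>x / L\<bar> > 2"
  by (simp add: field_simps)

lemma smooth_compact_fL: "L > 0 \<Longrightarrow> smooth_compact (fL r c L)"
  by (rule smooth_compact_of[OF sm_fL, of "2 * L"])
     (auto simp: fL_def intro!: chi_out less_imp_le dest!: scaled_out)

lemma smooth_compact_E: "L > 0 \<Longrightarrow> smooth_compact (\<lambda>x. gg r x * chi (x / L))"
  by (rule smooth_compact_of[of _ "2 * L"])
     (auto intro!: sm_mult sm_gg sm_scale sm_chi chi_out less_imp_le dest!: scaled_out)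

lemma gg_mono: "x^2 \<le> y^2 \<Longrightarrow> r \<ge> 0 \<Longrightarrow> gg r x \<le> gg r y"
  unfolding gg_def using w_pos[of x] by (intro powr_mono2) (auto simp: w_def)

lemma c_bound:
  assumes r: "r \<ge> 1" and L: "L \<ge> 1" and x: "L \<le> \<bar>x\<bar>"
  shows "gg r (2 * L) / L^2 \<le> 5 powr r * w x powr (r - 1)"
proof -
  have L2: "L^2 > 0" using L by simp
  have "gg r (2 * L) = (1 + 4 * L^2) powr r" by (simp add: gg_def w_def power_mult_distrib)
  also have "\<dots> \<le> (5 * L^2) powr r"
  proof (rule powr_mono2)
    have "1 \<le> L^2" using L by (simp add: one_le_power)
    then show "1 + 4 * L\<^sup>2 \<le> 5 * L\<^sup>2" by simp
  qed (use r in auto)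
  also have "\<dots> = 5 powr r * (L^2) powr r" by (simp add: powr_mult)
  finally have a: "gg r (2 * L) / L^2 \<le> 5 powr r * ((L^2) powr r / L^2)"
    using L2 by (simp add: divide_right_mono)
  have "(L^2) powr r / L^2 = (L^2) powr (r - 1)"
    using L2 by (simp add: powr_diff)
  also have "\<dots> \<le> w x powr (r - 1)"
  proof (rule powr_mono2)
    have "L^2 \<le> \<bar>x\<bar>^2" using x L by (intro power_mono) auto
    then show "L^2 \<le> w x" by (simp add: w_def)
  qed (use r in auto)
  finally show ?thesis using a by (smt (verit) mult_left_mono powr_ge_zero)
qed

lemma fL2_bound:
  assumes r: "r \<ge> 1" and L: "L \<ge> 1" and B1: "\<And>y. \<bar>chi1 y\<bar> \<le> B1" and B2: "\<And>y. \<bar>chi2 y\<bar> \<le> B2"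
  shows "\<bar>fL2 r (gg r (2 * L)) L x\<bar> \<le> (2 * r + 4 * r * (r - 1) + 8 * r * B1 + 5 powr r * B2) * w x powr (r - 1)"
proof -
  define W where "W = w x powr (r - 1)"
  have W0: "W \<ge> 0" unfolding W_def by simp
  have B10: "B1 \<ge> 0" using B1[of 0] by simp
  have B20: "B2 \<ge> 0" using B2[of 0] by simp
  have t1: "\<bar>g2 r x * chi (x / L)\<bar> \<le> (2 * r + 4 * r * (r - 1)) * W"
  proof -
    have "\<bar>g2 r x * chi (x / L)\<bar> \<le> \<bar>g2 r x\<bar>"
      using chi_nonneg[of "x/L"] chi_le1[of "x/L"] by (simp add: abs_mult mult_left_le)
    then show ?thesis using g2_bound[OF r, of x] unfolding W_def by linarith
  qed
  have t2: "\<bar>2 * g1 r x * chi1 (x / L) / L\<bar> \<le> 8 * r * B1 * W"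
  proof (cases "\<bar>x / L\<bar> > 2")
    case True then show ?thesis using chi1_out[OF True] W0 B10 r by simp
  next
    case False
    then have xl: "\<bar>x\<bar> / L \<le> 2" using L by (simp add: abs_divide)
    have "\<bar>2 * g1 r x * chi1 (x / L) / L\<bar> = 4 * r * (\<bar>x\<bar> / L) * \<bar>chi1 (x / L)\<bar> * W"
      unfolding g1_def W_def using r L by (simp add: abs_mult)
    also have "\<dots> \<le> 4 * r * 2 * B1 * W"
      using xl B1[of "x/L"] r W0 B10 L
      by (intro mult_right_mono mult_mono mult_left_mono) auto
    finally show ?thesis by simp
  qed
  have t3: "\<bar>(gg r x - gg r (2 * L)) * chi2 (x / L) / L^2\<bar> \<le> 5 powr r * B2 * W"
  proof (cases "\<bar>x / L\<bar> > 2 \<or> \<bar>x / L\<bar> < 1")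
    case True then show ?thesis using chi2_out chi2_in W0 B20 by auto
  next
    case False
    then have x1: "L \<le> \<bar>x\<bar>" and x2: "\<bar>x\<bar> \<le> 2 * L" using L by (auto simp: abs_divide field_simps)
    have "x^2 \<le> (2 * L)^2" using x2 by (metis abs_le_square_iff abs_of_nonneg L mult_nonneg_nonneg zero_le_numeral order_trans zero_le_one)
    then have "gg r x \<le> gg r (2 * L)" using r by (intro gg_mono) auto
    then have "\<bar>gg r x - gg r (2 * L)\<bar> \<le> gg r (2 * L)" using gg_nonneg[of r x] by simp
    then have "\<bar>gg r x - gg r (2 * L)\<bar> * \<bar>chi2 (x / L)\<bar> / L^2 \<le> gg r (2 * L) * B2 / L^2"
      using B2[of "x/L"] B20 by (intro divide_right_mono mult_mono) auto
    then have "\<bar>(gg r x - gg r (2 * L)) * chi2 (x / L) / L^2\<bar> \<le> gg r (2 * L) / L^2 * B2"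
      by (simp add: abs_mult abs_divide)
    also have "\<dots> \<le> 5 powr r * W * B2"
      using c_bound[OF r L x1] B20 unfolding W_def by (intro mult_right_mono) auto
    finally show ?thesis by (simp add: algebra_simps)
  qed
  have tri: "\<bar>a + b + c\<bar> \<le> \<bar>a\<bar> + \<bar>b\<bar> + \<bar>c\<bar>" for a b c :: real by linarith
  have "\<bar>fL2 r (gg r (2 * L)) L x\<bar> \<le> \<bar>g2 r x * chi (x / L)\<bar> + \<bar>2 * g1 r x * chi1 (x / L) / L\<bar>
     + \<bar>(gg r x - gg r (2 * L)) * chi2 (x / L) / L^2\<bar>"
    unfolding fL2_def by (rule tri)
  then show ?thesis using t1 t2 t3 unfolding W_def by (simp add: algebra_simps)
qed

lemma dq_bound:
  assumes r: "r \<ge> 1" and L: "L \<ge> 1"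
    and bnd: "\<And>z. \<bar>fL2 r c L z\<bar> \<le> C * w z powr (r - 1)" and C: "C \<ge> 0"
  shows "dq_kernel (fL r c L) x y \<le> C * (w x powr (r - 1) + w y powr (r - 1))"
proof -
  have L0: "L > 0" using L by simp
  have W: "w z powr (r - 1) \<le> w x powr (r - 1) + w y powr (r - 1)" if "z^2 \<le> max (x^2) (y^2)" for z
  proof -
    have "w z powr (r - 1) \<le> max (w x) (w y) powr (r - 1)"
      using that r w_pos[of z] by (intro powr_mono2) (auto simp: w_def max_def split: if_splits)
    also have "\<dots> \<le> w x powr (r - 1) + w y powr (r - 1)"
      by (simp add: max_def)
    finally show ?thesis .
  qed
  show ?thesis
  proof (cases "x = y")
    case True
    have "dq_kernel (fL r c L) x y = fL2 r c L x"
      using True by (simp add: dq_kernel_def deriv_fL[OF L0] deriv_fL1[OF L0])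
    also have "\<dots> \<le> C * w x powr (r - 1)" using bnd[of x] by simp
    also have "\<dots> \<le> C * (w x powr (r - 1) + w y powr (r - 1))"
      using C by (intro mult_left_mono) auto
    finally show ?thesis .
  next
    case False
    define a where "a = min x y"
    define b where "b = max x y"
    have ab: "a < b" using False by (auto simp: a_def b_def min_def max_def)
    obtain z where z: "a < z" "z < b" "fL1 r c L b - fL1 r c L a = (b - a) * fL2 r c L z"
      using MVT2[OF ab fL1_DERIV[OF L0]] by blast
    have q: "(fL1 r c L x - fL1 r c L y) / (x - y) = fL2 r c L z"
    proof -
      have "(fL1 r c L x - fL1 r c L y) / (x - y) = (fL1 r c L b - fL1 r c L a) / (b - a)"
        using False by (cases "x < y") (auto simp: a_def b_def min_def max_def field_simps)
      then show ?thesis using z(3) ab by simp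
    qed
    have "z^2 \<le> max (x^2) (y^2)"
    proof -
      have "\<bar>z\<bar> \<le> max \<bar>x\<bar> \<bar>y\<bar>" using z(1,2) by (auto simp: a_def b_def min_def max_def split: if_splits)
      then have "\<bar>z\<bar>^2 \<le> (max \<bar>x\<bar> \<bar>y\<bar>)^2" by (intro power_mono) auto
      then show ?thesis by (auto simp: max_def split: if_splits)
    qed
    then have "C * w z powr (r - 1) \<le> C * (w x powr (r - 1) + w y powr (r - 1))"
      using W C by (intro mult_left_mono) auto
    moreover have "dq_kernel (fL r c L) x y = fL2 r c L z"
      using False q by (simp add: dq_kernel_def deriv_fL[OF L0])
    ultimately show ?thesis using bnd[of z] by simp
  qed
qed

definition V1 :: "nat \<Rightarrow> (nat \<Rightarrow> real) \<Rightarrow> real \<Rightarrow> real" where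
  "V1 n a x = x ^ (2*n - 1) + (\<Sum>k=1..2*n-1. a k * x ^ (k - 1))"

lemma V_DERIV:
  assumes n: "n \<ge> 1"
  shows "(V n a has_real_derivative V1 n a x) (at x)"
proof -
  have d1: "((\<lambda>x. x ^ (2*n) / real (2*n)) has_real_derivative x ^ (2*n - 1)) (at x)"
    using DERIV_cdivide[OF DERIV_pow[of "2*n" x], of "real (2*n)"] n by simp
  have d2: "((\<lambda>x. a k / real k * x ^ k) has_real_derivative a k * x ^ (k - 1)) (at x)"
    if "k \<in> {1..2*n-1}" for k
    using DERIV_cmult[OF DERIV_pow[of k x], of "a k / real k"] that by simp
  have "((\<lambda>x. x ^ (2*n) / real (2*n) + (\<Sum>k=1..2*n-1. a k / real k * x ^ k)) has_real_derivative
      x ^ (2*n - 1) + (\<Sum>k=1..2*n-1. a k * x ^ (k - 1))) (at x)"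
    by (intro DERIV_add d1 DERIV_sum d2)
  then show ?thesis unfolding V_def[abs_def] V1_def .
qed

lemma deriv_V: "n \<ge> 1 \<Longrightarrow> deriv (V n a) = V1 n a"
  by (intro deriv_ext V_DERIV)

lemma V1_cont: "continuous_on UNIV (V1 n a)"
  unfolding V1_def[abs_def] by (intro continuous_intros)

lemma xV1_eq: "n \<ge> 1 \<Longrightarrow> x * V1 n a x = x ^ (2*n) + (\<Sum>k=1..2*n-1. a k * x ^ k)"
proof -
  assume n: "n \<ge> 1"
  have e: "2*n = Suc (2*n - 1)" using n by simp
  have "x * x ^ (2*n - 1) = x ^ (2*n)" by (subst (2) e) simp
  moreover have "x * (a k * x ^ (k - 1)) = a k * x ^ k" if "k \<in> {1..2*n-1}" for k
  proof -
    have "k = Suc (k - 1)" using that by simp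
    then have "x ^ k = x * x ^ (k - 1)" by (metis power_Suc)
    then show ?thesis by simp
  qed
  ultimately show ?thesis unfolding V1_def distrib_left sum_distrib_left
    by (metis (no_types, lifting) sum.cong)
qed

lemma xV1_bounds:
  assumes n: "n \<ge> 1"
  shows "\<exists>R0 D. R0 \<ge> 1 \<and> D \<ge> 0 \<and> (\<forall>x. \<bar>x\<bar> \<ge> R0 \<longrightarrow> x * V1 n a x \<ge> w x / 4) \<and> (\<forall>x. x * V1 n a x \<ge> - D)"
proof -
  define S where "S = (\<Sum>k=1..2*n-1. \<bar>a k\<bar>)"
  have S0: "S \<ge> 0" unfolding S_def by (intro sum_nonneg) auto
  define R0 where "R0 = 2 * S + 1"
  have R0: "R0 \<ge> 1" using S0 by (simp add: R0_def)
  define D where "D = S * R0 ^ (2*n)"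
  have D0: "D \<ge> 0" using S0 R0 by (simp add: D_def)
  have sumb: "\<bar>\<Sum>k=1..2*n-1. a k * x ^ k\<bar> \<le> S * B" if "\<And>k. k \<in> {1..2*n-1} \<Longrightarrow> \<bar>x\<bar> ^ k \<le> B" for x B
  proof -
    have "\<bar>\<Sum>k=1..2*n-1. a k * x ^ k\<bar> \<le> (\<Sum>k=1..2*n-1. \<bar>a k\<bar> * B)"
      by (rule order_trans[OF sum_abs]) (auto intro!: sum_mono mult_left_mono that simp: abs_mult power_abs)
    then show ?thesis by (simp add: S_def sum_distrib_right)
  qed
  have far: "x * V1 n a x \<ge> w x / 4" if x: "\<bar>x\<bar> \<ge> R0" for x
  proof -
    have x1: "\<bar>x\<bar> \<ge> 1" using x R0 by simp
    have "\<bar>x\<bar> ^ k \<le> \<bar>x\<bar> ^ (2*n - 1)" if "k \<in> {1..2*n-1}" for k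
      using that x1 by (intro power_increasing) auto
    then have s: "\<bar>\<Sum>k=1..2*n-1. a k * x ^ k\<bar> \<le> S * \<bar>x\<bar> ^ (2*n - 1)" by (rule sumb)
    have "S * \<bar>x\<bar> ^ (2*n - 1) \<le> (\<bar>x\<bar> / 2) * \<bar>x\<bar> ^ (2*n - 1)"
      using x S0 unfolding R0_def by (intro mult_right_mono) auto
    also have "\<dots> = \<bar>x\<bar> ^ (2*n) / 2"
    proof -
      have e: "2*n = Suc (2*n - 1)" using n by simp
      show ?thesis by (subst (2) e) simp
    qed
    finally have "S * \<bar>x\<bar> ^ (2*n - 1) \<le> \<bar>x\<bar> ^ (2*n) / 2" .
    have "x * V1 n a x \<ge> x ^ (2*n) / 2"
    proof -
      have "\<bar>x\<bar> ^ (2*n) = x ^ (2*n)" by (simp add: power_mult)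
      then show ?thesis using s xV1_eq[OF n, of x a] \<open>S * \<bar>x\<bar> ^ (2*n - 1) \<le> \<bar>x\<bar> ^ (2*n) / 2\<close> by linarith
    qed
    moreover have "x ^ (2*n) \<ge> x^2"
    proof -
      have "x^2 \<ge> 1" using x1 by (metis abs_le_square_iff abs_one one_power2)
      then have "(x^2) ^ n \<ge> (x^2) ^ 1" using n by (intro power_increasing) auto
      then show ?thesis by (simp add: power_mult)
    qed
    moreover have "x^2 \<ge> 1" using x1 by (metis abs_le_square_iff abs_one one_power2)
    ultimately show ?thesis by (simp add: w_def)
  qed
  have near: "x * V1 n a x \<ge> - D" for x
  proof (cases "\<bar>x\<bar> \<ge> R0")
    case True
    then show ?thesis using far[OF True] D0 w_pos[of x] by linarith
  next
    case False
    have "\<bar>x\<bar> ^ k \<le> R0 ^ (2*n)" if "k \<in> {1..2*n-1}" for k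
    proof -
      have "\<bar>x\<bar> ^ k \<le> R0 ^ k" using False by (intro power_mono) auto
      also have "\<dots> \<le> R0 ^ (2*n)" using that R0 by (intro power_increasing) auto
      finally show ?thesis .
    qed
    then have "\<bar>\<Sum>k=1..2*n-1. a k * x ^ k\<bar> \<le> D" unfolding D_def by (rule sumb)
    moreover have "x ^ (2*n) \<ge> 0" by (simp add: power_mult)
    ultimately show ?thesis using xV1_eq[OF n, of x a] by linarith
  qed
  show ?thesis using R0 D0 far near by blast
qed

lemma Vg_bounds:
  assumes n: "n \<ge> 1" and r: "r \<ge> 1"
  shows "\<exists>R0 C2. R0 \<ge> 1 \<and> C2 \<ge> 0 \<and> (\<forall>x. \<bar>x\<bar> \<ge> R0 \<longrightarrow> x * V1 n a x > 0)
     \<and> (\<forall>x. V1 n a x * g1 r x \<ge> r / 2 * gg r x - C2)"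
proof -
  obtain R0 D where R0: "R0 \<ge> 1" "D \<ge> 0" "\<And>x. \<bar>x\<bar> \<ge> R0 \<Longrightarrow> x * V1 n a x \<ge> w x / 4"
    "\<And>x. x * V1 n a x \<ge> - D"
    using xV1_bounds[OF n, of a] by blast
  define C2 where "C2 = r / 2 * w R0 powr r + 2 * r * w R0 powr (r - 1) * D"
  have C2: "C2 \<ge> 0" unfolding C2_def using r R0 by simp
  have eq: "V1 n a x * g1 r x = 2 * r * w x powr (r - 1) * (x * V1 n a x)" for x
    unfolding g1_def by (simp add: algebra_simps)
  have gw: "gg r x = w x powr (r - 1) * w x" for x
  proof -
    have "w x powr (r - 1) * w x = w x powr (r - 1) * w x powr 1" using w_pos[of x] by simp
    also have "\<dots> = w x powr ((r - 1) + 1)" by (rule powr_add[symmetric])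
    finally show ?thesis by (simp add: gg_def)
  qed
  have "V1 n a x * g1 r x \<ge> r / 2 * gg r x - C2" for x
  proof (cases "\<bar>x\<bar> \<ge> R0")
    case True
    have "2 * r * w x powr (r - 1) * (w x / 4) \<le> 2 * r * w x powr (r - 1) * (x * V1 n a x)"
      using R0(3)[OF True] r by (intro mult_left_mono) auto
    then have "r / 2 * gg r x \<le> V1 n a x * g1 r x" unfolding eq gw by (simp add: algebra_simps)
    then show ?thesis using C2 by linarith
  next
    case False
    have wx: "w x \<le> w R0"
    proof -
      have "\<bar>x\<bar>^2 \<le> R0^2" using False by (intro power_mono) auto
      then show ?thesis by (simp add: w_def)
    qed
    have a: "w x powr (r - 1) \<le> w R0 powr (r - 1)" using wx r w_pos[of x] by (intro powr_mono2) auto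
    have b: "gg r x \<le> w R0 powr r" using wx r w_pos[of x] unfolding gg_def by (intro powr_mono2) auto
    have "- (2 * r * w R0 powr (r - 1) * D) \<le> - (2 * r * w x powr (r - 1) * D)"
      using a r R0(2) by (simp add: mult_right_mono)
    also have "\<dots> = 2 * r * w x powr (r - 1) * (- D)" by simp
    also have "\<dots> \<le> 2 * r * w x powr (r - 1) * (x * V1 n a x)"
      using R0(4)[of x] r by (intro mult_left_mono) auto
    finally have "V1 n a x * g1 r x \<ge> - (2 * r * w R0 powr (r - 1) * D)" unfolding eq .
    moreover have "r / 2 * gg r x \<le> r / 2 * w R0 powr r" using b r by simp
    ultimately show ?thesis unfolding C2_def by linarith
  qed
  moreover have "x * V1 n a x > 0" if "\<bar>x\<bar> \<ge> R0" for x
    using R0(3)[OF that] w_pos[of x] by linarith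
  ultimately show ?thesis using R0 C2 by blast
qed

lemma VfL1_bound:
  assumes r: "r \<ge> 1" and L: "L \<ge> 1" and LR: "L \<ge> R0" and C2: "C2 \<ge> 0"
    and pos: "\<And>x. \<bar>x\<bar> \<ge> R0 \<Longrightarrow> x * V1 n a x > 0"
    and vg: "\<And>x. V1 n a x * g1 r x \<ge> r / 2 * gg r x - C2"
  shows "V1 n a x * fL1 r (gg r (2 * L)) L x \<ge> r / 2 * (gg r x * chi (x / L)) - C2"
proof -
  have L0: "L > 0" using L by simp
  have A: "V1 n a x * g1 r x * chi (x / L) \<ge> r / 2 * (gg r x * chi (x / L)) - C2"
  proof -
    have "(r / 2 * gg r x - C2) * chi (x / L) \<le> V1 n a x * g1 r x * chi (x / L)"
      using vg[of x] chi_nonneg[of "x/L"] by (intro mult_right_mono) auto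
    moreover have "C2 * chi (x / L) \<le> C2" using C2 chi_le1[of "x/L"] by (simp add: mult_left_le)
    ultimately show ?thesis by (simp add: algebra_simps)
  qed
  have B: "V1 n a x * ((gg r x - gg r (2 * L)) * chi1 (x / L) / L) \<ge> 0"
  proof (cases "chi1 (x / L) = 0")
    case True then show ?thesis by simp
  next
    case False
    then have i: "\<bar>x / L\<bar> \<ge> 1" "\<bar>x / L\<bar> \<le> 2" using chi1_in chi1_out by force+
    then have x1: "\<bar>x\<bar> \<ge> L" and x2: "\<bar>x\<bar> \<le> 2 * L" using L0 by (auto simp: abs_divide field_simps)
    have xv: "x * V1 n a x > 0" using pos x1 LR by auto
    have xc: "x * chi1 (x / L) \<le> 0"
    proof -
      have "(x / L) * chi1 (x / L) \<le> 0" by (rule chi1_sign)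
      then show ?thesis using L0 by (simp add: divide_le_0_iff mult.commute mult.left_commute divide_inverse)
          (metis divide_inverse divide_le_0_iff less_le_not_le mult.commute mult.left_commute times_divide_eq_left)
    qed
    have vc: "V1 n a x * chi1 (x / L) \<le> 0"
    proof -
      have "(x * V1 n a x) * (x * chi1 (x / L)) \<le> 0" using xv xc by (simp add: mult_nonneg_nonpos)
      then have "x^2 * (V1 n a x * chi1 (x / L)) \<le> 0" by (simp add: algebra_simps power2_eq_square)
      moreover have "x^2 > 0" using xv by (cases "x = 0") auto
      ultimately show ?thesis by (simp add: mult_le_0_iff)
    qed
    have "x^2 \<le> (2 * L)^2"
    proof -
      have "\<bar>x\<bar>^2 \<le> (2 * L)^2" using x2 by (intro power_mono) auto
      then show ?thesis by simp
    qed
    then have gc: "gg r x - gg r (2 * L) \<le> 0" using r gg_mono by auto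
    have "V1 n a x * ((gg r x - gg r (2 * L)) * chi1 (x / L) / L) = (V1 n a x * chi1 (x / L)) * (gg r x - gg r (2 * L)) / L"
      by (simp add: algebra_simps)
    also have "\<dots> \<ge> 0" using vc gc L0 by (simp add: mult_nonpos_nonpos)
    finally show ?thesis .
  qed
  have "V1 n a x * fL1 r (gg r (2 * L)) L x = V1 n a x * g1 r x * chi (x / L) + V1 n a x * ((gg r x - gg r (2 * L)) * chi1 (x / L) / L)"
    unfolding fL1_def by (simp add: algebra_simps)
  then show ?thesis using A B by linarith
qed

lemma pair_fst_snd:
  fixes h :: "real \<Rightarrow> real"
  assumes P: "prob_space M" and i: "integrable M h" and m: "h \<in> borel_measurable M"
  shows "integrable (M \<Otimes>\<^sub>M M) (\<lambda>z. h (fst z))" "integral\<^sup>L (M \<Otimes>\<^sub>M M) (\<lambda>z. h (fst z)) = integral\<^sup>L M h"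
    "integrable (M \<Otimes>\<^sub>M M) (\<lambda>z. h (snd z))" "integral\<^sup>L (M \<Otimes>\<^sub>M M) (\<lambda>z. h (snd z)) = integral\<^sup>L M h"
proof -
  interpret P: prob_space M by (rule P)
  interpret PP: pair_sigma_finite M M by (simp add: pair_sigma_finite_def P.sigma_finite_measure_axioms)
  have d: "distr (M \<Otimes>\<^sub>M M) M fst = M" by (rule P.distr_pair_fst)
  show i1: "integrable (M \<Otimes>\<^sub>M M) (\<lambda>z. h (fst z))"
    using integrable_distr_eq[OF measurable_fst[of M M] m] i d by simp
  show e1: "integral\<^sup>L (M \<Otimes>\<^sub>M M) (\<lambda>z. h (fst z)) = integral\<^sup>L M h"
    using integral_distr[OF measurable_fst[of M M] m] d by simp
  have "integrable (M \<Otimes>\<^sub>M M) (\<lambda>(x,y). h (fst (y, x)))"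
    by (rule PP.integrable_product_swap[OF i1])
  then show "integrable (M \<Otimes>\<^sub>M M) (\<lambda>z. h (snd z))" by (simp add: case_prod_beta')
  have "(\<integral>(x,y). h (fst (y, x)) \<partial>(M \<Otimes>\<^sub>M M)) = integral\<^sup>L (M \<Otimes>\<^sub>M M) (\<lambda>z. h (fst z))"
    by (rule PP.integral_product_swap) (use m in measurable)
  then show "integral\<^sup>L (M \<Otimes>\<^sub>M M) (\<lambda>z. h (snd z)) = integral\<^sup>L M h" using e1 by (simp add: case_prod_beta')
qed

lemma cont_supp_bounded:
  fixes f :: "real \<Rightarrow> real"
  assumes "continuous_on UNIV f" "\<And>x. \<bar>x\<bar> > R \<Longrightarrow> f x = 0"
  shows "\<exists>B. \<forall>x. \<bar>f x\<bar> \<le> B"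
proof -
  have "bounded (f ` {-R..R})"
    by (intro compact_imp_bounded compact_continuous_image compact_Icc continuous_on_subset[OF assms(1)]) auto
  then obtain B where B: "\<And>y. y \<in> {-R..R} \<Longrightarrow> \<bar>f y\<bar> \<le> B"
    unfolding bounded_iff by (metis image_eqI real_norm_def)
  have "\<bar>f y\<bar> \<le> max B 0" for y
  proof (cases "\<bar>y\<bar> > R")
    case True then show ?thesis using assms(2) by simp
  next
    case False then have "y \<in> {-R..R}" by auto
    then show ?thesis using B[of y] by linarith
  qed
  then show ?thesis by blast
qed

lemma sm_cont_on: "sm f \<Longrightarrow> continuous_on UNIV f"
  using sm_cont continuous_at_imp_continuous_on by blast

locale fp_setup =
  fixes n :: nat and a :: "nat \<Rightarrow> real" and \<mu> :: "real \<Rightarrow> real measure"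
  assumes n: "n \<ge> 1"
    and prob: "\<And>t. t \<ge> 0 \<Longrightarrow> prob_space (\<mu> t)"
    and borel: "\<And>t. t \<ge> 0 \<Longrightarrow> sets (\<mu> t) = sets borel"
    and eq: "\<And>f t. smooth_compact f \<Longrightarrow> t \<ge> 0 \<Longrightarrow>
       ((\<lambda>s. \<integral>x. f x \<partial>\<mu> s) has_real_derivative
          (1/2 * (\<integral>z. dq_kernel f (fst z) (snd z) \<partial>(\<mu> t \<Otimes>\<^sub>M \<mu> t))
           - (\<integral>x. deriv (V n a) x * deriv f x \<partial>\<mu> t))) (at t within {0..})"
begin

lemma meas: "continuous_on UNIV f \<Longrightarrow> t \<ge> 0 \<Longrightarrow> (f :: real \<Rightarrow> real) \<in> borel_measurable (\<mu> t)"
  using borel_measurable_continuous_onI measurable_cong_sets[OF borel[of t] refl] by blast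

lemma intg_bounded:
  assumes "continuous_on UNIV f" "\<And>x. \<bar>f x\<bar> \<le> B" "t \<ge> 0"
  shows "integrable (\<mu> t) (f :: real \<Rightarrow> real)"
proof -
  interpret prob_space "\<mu> t" using prob assms(3) .
  show ?thesis using assms meas by (intro integrable_const_bound[of _ B]) auto
qed

lemma intg_supp:
  assumes "continuous_on UNIV f" "\<And>x. \<bar>x\<bar> > R \<Longrightarrow> f x = 0" "t \<ge> 0"
  shows "integrable (\<mu> t) (f :: real \<Rightarrow> real)"
  using cont_supp_bounded[OF assms(1,2)] intg_bounded assms(1,3) by blast

lemma time_cont:
  assumes "smooth_compact f"
  shows "continuous_on {0..} (\<lambda>s. \<integral>x. f x \<partial>\<mu> s)"
  unfolding continuous_on_eq_continuous_within
proof
  fix x :: real assume "x \<in> {0..}"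
  then show "continuous (at x within {0..}) (\<lambda>s. \<integral>x. f x \<partial>\<mu> s)"
    using eq[OF assms, of x] by (intro DERIV_continuous) auto
qed

end

context fp_setup begin

lemma fL1_supp: "L > 0 \<Longrightarrow> \<bar>x\<bar> > 2 * L \<Longrightarrow> fL1 r c L x = 0"
  using scaled_out[of L x] chi_out[of "x/L"] chi1_out[of "x/L"] by (simp add: fL1_def)

lemma E_supp: "L > 0 \<Longrightarrow> \<bar>x\<bar> > 2 * L \<Longrightarrow> gg r x * chi (x / L) = 0"
  using scaled_out[of L x] chi_out[of "x/L"] by simp

lemma cont_gg: "continuous_on UNIV (gg r)" by (rule sm_cont_on[OF sm_gg])
lemma cont_E: "continuous_on UNIV (\<lambda>x. gg r x * chi (x / L))"
  by (rule sm_cont_on) (intro sm_mult sm_gg sm_scale sm_chi)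
lemma cont_fL1: "L > 0 \<Longrightarrow> continuous_on UNIV (fL1 r c L)"
  using sm_cont_on[OF sm_deriv[OF sm_fL]] deriv_fL by metis

lemma W_intg:
  assumes r: "r \<ge> 1" and u: "u \<ge> 0" and intg: "integrable (\<mu> u) (gg r)"
  shows "integrable (\<mu> u) (gg (r - 1))"
proof (rule Bochner_Integration.integrable_bound[OF intg])
  show "gg (r - 1) \<in> borel_measurable (\<mu> u)" by (rule meas[OF cont_gg u])
  show "AE x in \<mu> u. norm (gg (r - 1) x) \<le> norm (gg r x)"
    using w_ge1 by (auto simp: gg_def intro!: powr_mono)
qed

lemma E_intg: assumes L0: "L > 0" and u: "u \<ge> 0" shows "integrable (\<mu> u) (\<lambda>x. gg r x * chi (x / L))"
  using E_supp[OF L0] by (intro intg_supp[OF cont_E _ u, of "2 * L"]) auto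

lemma stepA:
  assumes r: "r \<ge> 1" and L: "L \<ge> 1" "L \<ge> R0" and C2: "C2 \<ge> 0"
    and pos: "\<And>x. \<bar>x\<bar> \<ge> R0 \<Longrightarrow> x * V1 n a x > 0"
    and vg: "\<And>x. V1 n a x * g1 r x \<ge> r / 2 * gg r x - C2"
    and bnd: "\<And>z. \<bar>fL2 r (gg r (2 * L)) L z\<bar> \<le> Cb * w z powr (r - 1)" and Cb: "Cb \<ge> 0"
    and u: "u \<ge> 0"
    and IH: "(\<integral>x. gg (r - 1) x \<partial>\<mu> u) \<le> M'"
    and intg: "integrable (\<mu> u) (gg r)"
  shows "1/2 * (\<integral>z. dq_kernel (fL r (gg r (2 * L)) L) (fst z) (snd z) \<partial>(\<mu> u \<Otimes>\<^sub>M \<mu> u))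
           - (\<integral>x. deriv (V n a) x * deriv (fL r (gg r (2 * L)) L) x \<partial>\<mu> u)
         \<le> Cb * M' + C2 - r / 2 * (\<integral>x. gg r x * chi (x / L) \<partial>\<mu> u)"
proof -
  interpret prob_space "\<mu> u" using prob u .
  define c where "c = gg r (2 * L)"
  have L0: "L > 0" using L by simp
  have Wi: "integrable (\<mu> u) (gg (r - 1))" by (rule W_intg[OF r u intg])
  have Wm: "gg (r - 1) \<in> borel_measurable (\<mu> u)" by (rule meas[OF cont_gg u])
  have M'0: "M' \<ge> 0" using IH integral_nonneg_AE[of "gg (r - 1)" "\<mu> u"] gg_nonneg by (smt (verit) AE_I2)
  note pf = pair_fst_snd[OF prob[OF u] Wi Wm]
  have Kb: "(\<integral>z. dq_kernel (fL r c L) (fst z) (snd z) \<partial>(\<mu> u \<Otimes>\<^sub>M \<mu> u)) \<le> 2 * Cb * M'"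
  proof (cases "integrable (\<mu> u \<Otimes>\<^sub>M \<mu> u) (\<lambda>z. dq_kernel (fL r c L) (fst z) (snd z))")
    case True
    have bi: "integrable (\<mu> u \<Otimes>\<^sub>M \<mu> u) (\<lambda>z. Cb * (gg (r - 1) (fst z) + gg (r - 1) (snd z)))"
      using pf by (intro integrable_mult_right integrable_add) auto
    have "(\<integral>z. dq_kernel (fL r c L) (fst z) (snd z) \<partial>(\<mu> u \<Otimes>\<^sub>M \<mu> u))
        \<le> (\<integral>z. Cb * (gg (r - 1) (fst z) + gg (r - 1) (snd z)) \<partial>(\<mu> u \<Otimes>\<^sub>M \<mu> u))"
      using True bi
    proof (rule integral_mono)
      fix z show "dq_kernel (fL r c L) (fst z) (snd z) \<le> Cb * (gg (r - 1) (fst z) + gg (r - 1) (snd z))"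
        using dq_bound[OF r L(1) bnd[unfolded c_def[symmetric]] Cb] unfolding gg_def by blast
    qed
    also have "\<dots> = Cb * ((\<integral>x. gg (r - 1) x \<partial>\<mu> u) + (\<integral>x. gg (r - 1) x \<partial>\<mu> u))"
      using pf by (simp add: integral_add)
    also have "\<dots> \<le> 2 * Cb * M'" using IH Cb by (simp add: mult_left_mono)
    finally show ?thesis .
  next
    case False
    then show ?thesis using Cb M'0 by (simp add: not_integrable_integral_eq)
  qed
  have dV: "deriv (V n a) = V1 n a" by (rule deriv_V[OF n])
  have dF: "deriv (fL r c L) = fL1 r c L" by (rule deriv_fL[OF L0])
  have i1: "integrable (\<mu> u) (\<lambda>x. V1 n a x * fL1 r c L x)"
    by (rule intg_supp[of _ "2 * L"]) (auto intro!: continuous_intros V1_cont cont_fL1 L0 u simp: fL1_supp[OF L0])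
  have iE: "integrable (\<mu> u) (\<lambda>x. gg r x * chi (x / L))" by (rule E_intg[OF L0 u])
  have i2: "integrable (\<mu> u) (\<lambda>x. r / 2 * (gg r x * chi (x / L)) - C2)"
  proof -
    have "integrable (\<mu> u) (\<lambda>x. C2)" by simp
    moreover have "integrable (\<mu> u) (\<lambda>x. r / 2 * (gg r x * chi (x / L)))"
      using iE by (rule integrable_mult_right)
    ultimately show ?thesis by (rule Bochner_Integration.integrable_diff[rotated])
  qed
  have "(\<integral>x. r / 2 * (gg r x * chi (x / L)) - C2 \<partial>\<mu> u) \<le> (\<integral>x. V1 n a x * fL1 r c L x \<partial>\<mu> u)"
    using i2 i1
  proof (rule integral_mono)
    fix x show "r / 2 * (gg r x * chi (x / L)) - C2 \<le> V1 n a x * fL1 r c L x"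
      unfolding c_def by (rule VfL1_bound[OF r L C2 pos vg])
  qed
  moreover have "(\<integral>x. r / 2 * (gg r x * chi (x / L)) - C2 \<partial>\<mu> u) = r / 2 * (\<integral>x. gg r x * chi (x / L) \<partial>\<mu> u) - C2"
    using iE by (simp add: integral_diff prob_space)
  ultimately show ?thesis using Kb unfolding dV dF c_def[symmetric] by simp
qed

end

locale core_setup = fp_setup +
  fixes r R0 C2 Cb M' :: real
  assumes r: "r \<ge> 1" and R0: "R0 \<ge> 1" and C2: "C2 \<ge> 0" and Cb: "Cb \<ge> 0"
    and pos: "\<And>x. \<bar>x\<bar> \<ge> R0 \<Longrightarrow> x * V1 n a x > 0"
    and vg: "\<And>x. V1 n a x * g1 r x \<ge> r / 2 * gg r x - C2"
    and bnd: "\<And>L z. L \<ge> 1 \<Longrightarrow> \<bar>fL2 r (gg r (2 * L)) L z\<bar> \<le> Cb * w z powr (r - 1)"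
    and IH: "\<And>u. u \<ge> 0 \<Longrightarrow> (\<integral>x. gg (r - 1) x \<partial>\<mu> u) \<le> M'"
    and intg: "\<And>u. u \<ge> 0 \<Longrightarrow> integrable (\<mu> u) (gg r)"
begin

definition "cL L = gg r (2 * L)"
definition "E L u = (\<integral>x. gg r x * chi (x / L) \<partial>\<mu> u)"
definition "G u = (\<integral>x. gg r x \<partial>\<mu> u)"
definition "F L u = (\<integral>x. fL r (cL L) L x \<partial>\<mu> u)"
definition "A = Cb * M' + C2"
definition "K = 1 + 4 powr r"
definition "Lam L u = 1/2 * (\<integral>z. dq_kernel (fL r (cL L) L) (fst z) (snd z) \<partial>(\<mu> u \<Otimes>\<^sub>M \<mu> u))
           - (\<integral>x. deriv (V n a) x * deriv (fL r (cL L) L) x \<partial>\<mu> u)"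

lemma Lam_bound: "L \<ge> R0 \<Longrightarrow> u \<ge> 0 \<Longrightarrow> Lam L u \<le> A - r / 2 * E L u"
  unfolding Lam_def A_def E_def cL_def
  using stepA[OF r _ _ C2 pos vg bnd Cb _ IH intg] R0 by auto

lemma fL_lower: "fL r (cL L) L x \<ge> gg r x * chi (x / L) - cL L"
proof -
  have c0: "cL L \<ge> 0" by (simp add: cL_def gg_nonneg)
  have "cL L * chi (x / L) \<le> cL L" using c0 chi_le1[of "x/L"] by (simp add: mult_left_le)
  then show ?thesis by (simp add: fL_def algebra_simps)
qed

lemma fL_upper: assumes L: "L \<ge> 1" shows "fL r (cL L) L x \<le> K * gg r x - cL L"
proof (cases "\<bar>x\<bar> \<le> L")
  case True
  then have "chi (x / L) = 1" using L by (intro chi_in) (simp add: abs_divide)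
  moreover have "gg r x \<le> K * gg r x"
  proof -
    have "1 * gg r x \<le> K * gg r x" using gg_nonneg[of r x] by (intro mult_right_mono) (auto simp: K_def)
    then show ?thesis by simp
  qed
  ultimately show ?thesis by (simp add: fL_def)
next
  case False
  have c: "cL L \<le> 4 powr r * gg r x"
  proof -
    have "cL L = (1 + 4 * L^2) powr r" by (simp add: cL_def gg_def w_def power_mult_distrib)
    also have "\<dots> \<le> (4 * w x) powr r"
    proof (rule powr_mono2)
      have "L^2 \<le> \<bar>x\<bar>^2" using False L by (intro power_mono) auto
      then show "1 + 4 * L^2 \<le> 4 * w x" by (simp add: w_def)
    qed (use r in auto)
    also have "\<dots> = 4 powr r * gg r x" by (simp add: powr_mult gg_def)
    finally show ?thesis .
  qed
  have "fL r (cL L) L x = gg r x * chi (x / L) + cL L * (1 - chi (x / L)) - cL L"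
    by (simp add: fL_def algebra_simps)
  also have "\<dots> \<le> gg r x + cL L - cL L"
  proof -
    have "gg r x * chi (x / L) \<le> gg r x" using gg_nonneg[of r x] chi_le1[of "x/L"] by (simp add: mult_left_le)
    moreover have "cL L * (1 - chi (x / L)) \<le> cL L" using chi_nonneg[of "x/L"] by (simp add: cL_def gg_nonneg mult_left_le)
    ultimately show ?thesis by simp
  qed
  also have "\<dots> \<le> K * gg r x - cL L" using c by (simp add: K_def algebra_simps)
  finally show ?thesis .
qed

lemma fL_intg: assumes L0: "L > 0" and u: "u \<ge> 0" shows "integrable (\<mu> u) (fL r (cL L) L)"
proof (rule intg_supp[OF sm_cont_on[OF sm_fL] _ u, of "2 * L"])
  fix x assume "\<bar>x\<bar> > 2 * L"
  then have "chi (x / L) = 0" using scaled_out[OF L0] chi_out by (meson less_imp_le)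
  then show "fL r (cL L) L x = 0" by (simp add: fL_def)
qed

lemma F_lower: "L \<ge> 1 \<Longrightarrow> u \<ge> 0 \<Longrightarrow> F L u \<ge> E L u - cL L"
proof -
  assume L: "L \<ge> 1" and u: "u \<ge> 0"
  interpret prob_space "\<mu> u" using prob u .
  have "(\<integral>x. gg r x * chi (x / L) - cL L \<partial>\<mu> u) \<le> F L u"
    unfolding F_def using E_intg[of L u r] fL_intg[of L u] L u fL_lower
    by (intro integral_mono) auto
  moreover have "(\<integral>x. gg r x * chi (x / L) - cL L \<partial>\<mu> u) = E L u - cL L"
    using E_intg[of L u r] L u by (simp add: E_def prob_space)
  ultimately show ?thesis by simp
qed

lemma F_upper: "L \<ge> 1 \<Longrightarrow> u \<ge> 0 \<Longrightarrow> F L u \<le> K * G u - cL L"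
proof -
  assume L: "L \<ge> 1" and u: "u \<ge> 0"
  interpret prob_space "\<mu> u" using prob u .
  have "F L u \<le> (\<integral>x. K * gg r x - cL L \<partial>\<mu> u)"
    unfolding F_def using intg[OF u] fL_intg[of L u] L u fL_upper
    by (intro integral_mono) auto
  moreover have "(\<integral>x. K * gg r x - cL L \<partial>\<mu> u) = K * G u - cL L"
    using intg[OF u] by (simp add: G_def prob_space)
  ultimately show ?thesis by simp
qed

lemma E_nonneg: "u \<ge> 0 \<Longrightarrow> E L u \<ge> 0"
  unfolding E_def using chi_nonneg gg_nonneg by (intro integral_nonneg_AE AE_I2) auto

lemma G_nonneg: "u \<ge> 0 \<Longrightarrow> G u \<ge> 0"
  unfolding G_def using gg_nonneg by (intro integral_nonneg_AE AE_I2) auto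

lemma E_cont: "L > 0 \<Longrightarrow> continuous_on {0..} (E L)"
  unfolding E_def[abs_def] by (rule time_cont[OF smooth_compact_E])

lemma main_ineq:
  assumes L: "L \<ge> R0" and s: "0 \<le> s" "s \<le> t"
  shows "E L t + r / 2 * integral {s..t} (E L) \<le> K * G s + A * (t - s)"
proof -
  have L1: "L \<ge> 1" and L0: "L > 0" using L R0 by auto
  have sc: "smooth_compact (fL r (cL L) L)" by (rule smooth_compact_fL[OF L0])
  have "(Lam L has_integral F L t - F L s) {s..t}"
  proof (rule fundamental_theorem_of_calculus[OF s(2)])
    fix x assume x: "x \<in> {s..t}"
    have "(F L has_real_derivative Lam L x) (at x within {0..})"
      unfolding F_def[abs_def] Lam_def using eq[OF sc, of x] x s by auto
    then have "(F L has_real_derivative Lam L x) (at x within {s..t})"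
      by (rule DERIV_subset) (use s in auto)
    then show "(F L has_vector_derivative Lam L x) (at x within {s..t})"
      by (simp add: has_real_derivative_iff_has_vector_derivative)
  qed
  moreover have ci: "(E L) integrable_on {s..t}"
    by (rule integrable_continuous_interval, rule continuous_on_subset[OF E_cont[OF L0]]) (use s in auto)
  have "((\<lambda>u. A - r / 2 * E L u) has_integral (A * (t - s) - r / 2 * integral {s..t} (E L))) {s..t}"
  proof -
    have "((\<lambda>u. A) has_integral A * (t - s)) {s..t}"
      using has_integral_const_real[of A s t] s by (simp add: mult.commute)
    moreover have "((\<lambda>u. r / 2 * E L u) has_integral r / 2 * integral {s..t} (E L)) {s..t}"
      by (rule has_integral_mult_right[OF integrable_integral[OF ci]])
    ultimately show ?thesis by (rule has_integral_diff)
  qed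
  ultimately have "F L t - F L s \<le> A * (t - s) - r / 2 * integral {s..t} (E L)"
    by (rule has_integral_le) (use Lam_bound L s in auto)
  then show ?thesis using F_lower[OF L1, of t] F_upper[OF L1 s(1)] s by linarith
qed

end

context core_setup begin

lemma E_mono: assumes L: "0 < L" "L \<le> L'" and u: "u \<ge> 0" shows "E L u \<le> E L' u"
  unfolding E_def
proof (rule integral_mono[OF E_intg[OF L(1) u] E_intg[OF _ u]])
  show "0 < L'" using L by simp
  fix x
  have "(x / L')^2 \<le> (x / L)^2"
  proof -
    have "\<bar>x / L'\<bar> \<le> \<bar>x / L\<bar>" using L by (simp add: abs_divide divide_left_mono)
    then have "\<bar>x / L'\<bar>^2 \<le> \<bar>x / L\<bar>^2" by (intro power_mono) auto
    then show ?thesis by (simp only: power2_abs)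
  qed
  then have "chi (x / L) \<le> chi (x / L')" by (rule chi_mono)
  then show "gg r x * chi (x / L) \<le> gg r x * chi (x / L')" using gg_nonneg[of r x] by (rule mult_left_mono)
qed

lemma E_lim: assumes u: "u \<ge> 0" shows "(\<lambda>N. E (real N + R0) u) \<longlonglongrightarrow> G u"
  unfolding E_def G_def
proof (rule integral_dominated_convergence[where w = "gg r"])
  show "gg r \<in> borel_measurable (\<mu> u)" by (rule meas[OF cont_gg u])
  show "(\<lambda>x. gg r x * chi (x / (real N + R0))) \<in> borel_measurable (\<mu> u)" for N
    by (rule meas[OF cont_E u])
  show "integrable (\<mu> u) (gg r)" by (rule intg[OF u])
  show "AE x in \<mu> u. (\<lambda>N. gg r x * chi (x / (real N + R0))) \<longlonglongrightarrow> gg r x"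
  proof (rule AE_I2)
    fix x
    obtain N0 :: nat where N0: "\<bar>x\<bar> \<le> real N0" using real_arch_simple by blast
    have "eventually (\<lambda>N. gg r x = gg r x * chi (x / (real N + R0))) sequentially"
      unfolding eventually_sequentially
    proof (intro exI allI impI)
      fix N assume "N0 \<le> N"
      then have "\<bar>x\<bar> \<le> real N + R0" using N0 R0 by linarith
      then have "\<bar>x / (real N + R0)\<bar> \<le> 1" using R0 by (simp add: abs_divide)
      then show "gg r x = gg r x * chi (x / (real N + R0))" using chi_in by simp
    qed
    then show "(\<lambda>N. gg r x * chi (x / (real N + R0))) \<longlonglongrightarrow> gg r x"
      by (rule Lim_transform_eventually[OF tendsto_const])
  qed
  show "AE x in \<mu> u. norm (gg r x * chi (x / (real N + R0))) \<le> gg r x" for N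
    using gg_nonneg chi_nonneg chi_le1 by (intro AE_I2) (simp add: abs_mult mult_left_le)
qed

lemma int_nonneg: assumes L: "L \<ge> R0" and s: "0 \<le> s" "s \<le> t" shows "integral {s..t} (E L) \<ge> 0"
proof (rule integral_nonneg)
  show "(E L) integrable_on {s..t}"
    by (rule integrable_continuous_interval, rule continuous_on_subset[OF E_cont]) (use s L R0 in auto)
  show "\<And>x. x \<in> {s..t} \<Longrightarrow> 0 \<le> E L x" using E_nonneg s by auto
qed

lemma G_le: assumes s: "0 \<le> s" "s \<le> t" shows "G t \<le> K * G s + A * (t - s)"
proof (rule tendsto_upperbound[OF E_lim])
  show "t \<ge> 0" using s by simp
  show "eventually (\<lambda>N. E (real N + R0) t \<le> K * G s + A * (t - s)) sequentially"
  proof (intro always_eventually allI)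
    fix N :: nat
    have L: "real N + R0 \<ge> R0" by simp
    show "E (real N + R0) t \<le> K * G s + A * (t - s)"
    proof -
      have "0 \<le> r / 2 * integral {s..t} (E (real N + R0))" using int_nonneg[OF L s] r by simp
      then show ?thesis using main_ineq[OF L s] by linarith
    qed
  qed
qed simp

lemma exist_small:
  assumes s: "0 \<le> s" "s < t"
  shows "\<exists>u\<in>{s..t}. G u \<le> (K * G s + A * (t - s)) / (r / 2 * (t - s))"
proof -
  define \<beta> where "\<beta> = (K * G s + A * (t - s)) / (r / 2 * (t - s))"
  have pos: "r / 2 * (t - s) > 0" using r s by simp
  have "\<exists>x\<in>{s..t}. E (real N + R0) x \<le> \<beta>" for N
  proof -
    define L where "L = real N + R0"
    have L: "L \<ge> R0" "L > 0" using R0 by (auto simp: L_def)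
    have co: "continuous_on {s..t} (E L)" by (rule continuous_on_subset[OF E_cont[OF L(2)]]) (use s in auto)
    obtain x where x: "x \<in> {s..t}" "\<And>y. y \<in> {s..t} \<Longrightarrow> E L x \<le> E L y"
      using continuous_attains_inf[OF compact_Icc _ co] s by auto
    have ci: "(E L) integrable_on {s..t}" by (rule integrable_continuous_interval[OF co])
    have "(t - s) * E L x \<le> integral {s..t} (E L)"
      using integral_le[OF integrable_const_ivl ci, of "E L x"] x(2) s by (simp add: mult.commute)
    then have "r / 2 * ((t - s) * E L x) \<le> r / 2 * integral {s..t} (E L)" using r by simp
    moreover have "E L t \<ge> 0" using E_nonneg s by simp
    ultimately have "r / 2 * (t - s) * E L x \<le> K * G s + A * (t - s)"
      using main_ineq[OF L(1) s(1) less_imp_le[OF s(2)]] by (simp only: mult.assoc)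
    then have "E L x \<le> \<beta>" unfolding \<beta>_def using pos by (simp add: field_simps mult.commute)
    then show ?thesis using x(1) L_def by blast
  qed
  then obtain u where u: "\<And>N. u N \<in> {s..t}" "\<And>N. E (real N + R0) (u N) \<le> \<beta>" by metis
  obtain l \<sigma> where l: "l \<in> {s..t}" "strict_mono \<sigma>" "(u \<circ> \<sigma>) \<longlonglongrightarrow> l"
    using compact_Icc[of s t, THEN compact_imp_seq_compact] u(1) unfolding seq_compact_def by metis
  have "E (real M + R0) l \<le> \<beta>" for M
  proof -
    have LM: "real M + R0 > 0" using R0 by simp
    have "(\<lambda>k. E (real M + R0) (u (\<sigma> k))) \<longlonglongrightarrow> E (real M + R0) l"
    proof (rule continuous_on_tendsto_compose[OF E_cont[OF LM] l(3)[unfolded o_def]])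
      show "l \<in> {0..}" using l(1) s by auto
      show "\<forall>\<^sub>F k in sequentially. u (\<sigma> k) \<in> {0..}"
        using u(1) s by (intro always_eventually allI) (auto intro: order_trans)
    qed
    moreover have "eventually (\<lambda>k. E (real M + R0) (u (\<sigma> k)) \<le> \<beta>) sequentially"
      unfolding eventually_sequentially
    proof (intro exI allI impI)
      fix k assume "M \<le> k"
      then have "M \<le> \<sigma> k" using seq_suble[OF l(2), of k] by simp
      then have "E (real M + R0) (u (\<sigma> k)) \<le> E (real (\<sigma> k) + R0) (u (\<sigma> k))"
        using u(1)[of "\<sigma> k"] s LM by (intro E_mono) auto
      then show "E (real M + R0) (u (\<sigma> k)) \<le> \<beta>" using u(2)[of "\<sigma> k"] by simp
    qed
    ultimately show ?thesis by (rule tendsto_upperbound) simp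
  qed
  then have "G l \<le> \<beta>"
    using l(1) s by (intro tendsto_upperbound[OF E_lim] always_eventually allI) auto
  then show ?thesis using l(1) unfolding \<beta>_def by blast
qed

lemma M'_nonneg: "M' \<ge> 0"
proof -
  have "0 \<le> (\<integral>x. gg (r - 1) x \<partial>\<mu> 0)" using gg_nonneg by (intro integral_nonneg_AE AE_I2) auto
  then show ?thesis using IH[of 0] by simp
qed

lemma A_nonneg: "A \<ge> 0" unfolding A_def using M'_nonneg Cb C2 by simp

lemma K_ge1: "K \<ge> 1" unfolding K_def by simp

lemma G_bounded: "\<exists>M. \<forall>t\<ge>0. G t \<le> M"
proof -
  define \<tau> where "\<tau> = 4 * K^2 / r + 1"
  have \<tau>: "\<tau> > 0"
  proof -
    have "4 * K^2 / r \<ge> 0" using r by simp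
    then show ?thesis by (simp add: \<tau>_def)
  qed
  define B where "B = K * A / (r / 2) + A * \<tau>"
  define B0 where "B0 = K * G 0 + A * \<tau>"
  define Mx where "Mx = max B0 (2 * B)"
  have step: "G t \<le> G (t - \<tau>) / 2 + B" if t: "t \<ge> \<tau>" for t
  proof -
    define s where "s = t - \<tau>"
    have s: "0 \<le> s" "s < t" using t \<tau> by (auto simp: s_def)
    have ts: "t - s = \<tau>" by (simp add: s_def)
    obtain u where u: "u \<in> {s..t}" "G u \<le> (K * G s + A * \<tau>) / (r / 2 * \<tau>)"
      using exist_small[OF s] unfolding ts by blast
    have Gs: "G s \<ge> 0" by (rule G_nonneg[OF s(1)])
    have c\<tau>: "r / 2 * \<tau> = 2 * K^2 + r / 2" using r by (simp add: \<tau>_def field_simps)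
    have "G t \<le> K * G u + A * (t - u)" using G_le[of u t] u s by auto
    also have "\<dots> \<le> K * G u + A * \<tau>" using u(1) A_nonneg ts by (intro add_left_mono mult_left_mono) auto
    also have "K * G u \<le> K * ((K * G s + A * \<tau>) / (r / 2 * \<tau>))"
      using u(2) K_ge1 by (intro mult_left_mono) auto
    also have "\<dots> = (K^2 / (r / 2 * \<tau>)) * G s + K * A / (r / 2)"
      using r \<tau> by (simp add: field_simps power2_eq_square)
    also have "(K^2 / (r / 2 * \<tau>)) * G s \<le> (1 / 2) * G s"
    proof (rule mult_right_mono[OF _ Gs])
      have "K^2 \<le> 1 / 2 * (r / 2 * \<tau>)" unfolding c\<tau> using r by simp
      then show "K^2 / (r / 2 * \<tau>) \<le> 1 / 2" using r \<tau> by (simp add: divide_le_eq)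
    qed
    finally show ?thesis unfolding B_def s_def by simp
  qed
  have ind: "\<forall>t. 0 \<le> t \<longrightarrow> t \<le> real k * \<tau> + \<tau> \<longrightarrow> G t \<le> Mx" for k :: nat
  proof (induction k)
    case 0
    show ?case
    proof (intro allI impI)
      fix t assume t: "0 \<le> t" "t \<le> real 0 * \<tau> + \<tau>"
      have "G t \<le> K * G 0 + A * (t - 0)" using G_le[of 0 t] t by simp
      also have "\<dots> \<le> B0" unfolding B0_def using t A_nonneg by (simp add: mult_left_mono)
      finally show "G t \<le> Mx" unfolding Mx_def by simp
    qed
  next
    case (Suc k)
    show ?case
    proof (intro allI impI)
      fix t assume t: "0 \<le> t" "t \<le> real (Suc k) * \<tau> + \<tau>"
      show "G t \<le> Mx"
      proof (cases "t \<le> \<tau>")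
        case True
        have "G t \<le> K * G 0 + A * (t - 0)" using G_le[of 0 t] t by simp
        also have "\<dots> \<le> B0" unfolding B0_def using True A_nonneg by (simp add: mult_left_mono)
        finally show ?thesis unfolding Mx_def by simp
      next
        case False
        then have "t - \<tau> \<ge> 0" "t - \<tau> \<le> real k * \<tau> + \<tau>" using t by (auto simp: algebra_simps)
        then have "G (t - \<tau>) \<le> Mx" using Suc.IH by blast
        moreover have "G t \<le> G (t - \<tau>) / 2 + B" using step False by simp
        ultimately show ?thesis unfolding Mx_def by (simp add: max_def split: if_splits)
      qed
    qed
  qed
  have "G t \<le> Mx" if t: "t \<ge> 0" for t
  proof -
    obtain k :: nat where k: "t / \<tau> \<le> real k" using real_arch_simple by blast
    then have "t \<le> real k * \<tau>" using \<tau> by (simp add: divide_le_eq)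
    then show ?thesis using ind[of k] t \<tau> by auto
  qed
  then show ?thesis by blast
qed

end

context fp_setup begin

lemma step:
  assumes r: "r \<ge> 1" and intg: "\<And>u. u \<ge> 0 \<Longrightarrow> integrable (\<mu> u) (gg r)"
    and IH: "\<exists>M'. \<forall>u\<ge>0. (\<integral>x. gg (r - 1) x \<partial>\<mu> u) \<le> M'"
  shows "\<exists>M. \<forall>t\<ge>0. (\<integral>x. gg r x \<partial>\<mu> t) \<le> M"
proof -
  obtain M' where M': "\<And>u. u \<ge> 0 \<Longrightarrow> (\<integral>x. gg (r - 1) x \<partial>\<mu> u) \<le> M'" using IH by blast
  obtain R0 C2 where RC: "R0 \<ge> 1" "C2 \<ge> 0" "\<And>x. \<bar>x\<bar> \<ge> R0 \<Longrightarrow> x * V1 n a x > 0"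
    "\<And>x. V1 n a x * g1 r x \<ge> r / 2 * gg r x - C2"
    using Vg_bounds[OF n r, of a] by blast
  obtain B1 where B1: "\<And>y. \<bar>chi1 y\<bar> \<le> B1" using chi1_bound by blast
  obtain B2 where B2: "\<And>y. \<bar>chi2 y\<bar> \<le> B2" using chi2_bound by blast
  define Cb where "Cb = 2 * r + 4 * r * (r - 1) + 8 * r * B1 + 5 powr r * B2"
  have B10: "B1 \<ge> 0" using B1[of 0] by simp
  have B20: "B2 \<ge> 0" using B2[of 0] by simp
  have Cb: "Cb \<ge> 0" unfolding Cb_def using r B10 B20 by simp
  interpret core_setup n a \<mu> r R0 C2 Cb M'
  proof (unfold_locales)
    show "\<And>L z. L \<ge> 1 \<Longrightarrow> \<bar>fL2 r (gg r (2 * L)) L z\<bar> \<le> Cb * w z powr (r - 1)"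
      unfolding Cb_def using fL2_bound[OF r _ B1 B2] by blast
  qed (use r RC Cb M' intg in auto)
  show ?thesis using G_bounded unfolding G_def by blast
qed

end

lemma gg_le_moment:
  assumes q: "q \<le> N"
  shows "gg (real q / 2) x \<le> 2 powr (real q / 2) * (1 + \<bar>x\<bar> ^ N)"
proof (cases "\<bar>x\<bar> \<le> 1")
  case True
  have "gg (real q / 2) x \<le> 2 powr (real q / 2)"
    unfolding gg_def using True w_pos[of x] by (intro powr_mono2) (auto simp: w_def abs_square_le_1)
  also have "\<dots> \<le> 2 powr (real q / 2) * (1 + \<bar>x\<bar> ^ N)" by simp
  finally show ?thesis .
next
  case False
  then have x1: "\<bar>x\<bar> > 1" by simp
  have "gg (real q / 2) x \<le> (2 * x^2) powr (real q / 2)"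
    unfolding gg_def using x1 w_pos[of x] by (intro powr_mono2) (auto simp: w_def abs_square_le_1 less_imp_le
        intro: order_trans[OF _ power_mono[of 1 "\<bar>x\<bar>" 2, simplified]])
  also have "\<dots> = 2 powr (real q / 2) * (\<bar>x\<bar> powr 2) powr (real q / 2)"
    using x1 by (simp add: powr_mult powr_numeral)
  also have "(\<bar>x\<bar> powr 2) powr (real q / 2) = \<bar>x\<bar> ^ q"
  proof -
    have "(\<bar>x\<bar> powr 2) powr (real q / 2) = \<bar>x\<bar> powr (2 * (real q / 2))" by (rule powr_powr)
    also have "\<dots> = \<bar>x\<bar> powr (real q)" by simp
    also have "\<dots> = \<bar>x\<bar> ^ q" using x1 by (simp add: powr_realpow)
    finally show ?thesis .
  qed
  also have "\<bar>x\<bar> ^ q \<le> 1 + \<bar>x\<bar> ^ N"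
  proof -
    have "\<bar>x\<bar> ^ q \<le> \<bar>x\<bar> ^ N" using x1 q by (intro power_increasing) auto
    then show ?thesis by simp
  qed
  finally show ?thesis by (simp add: mult_left_mono)
qed

lemma abs_pow_le_gg: "\<bar>x\<bar> ^ p \<le> gg (real p / 2) x"
proof (cases "x = 0")
  case True
  show ?thesis
  proof (cases p)
    case 0 then show ?thesis using w_pos[of x] by (simp add: gg_def)
  next
    case (Suc k) then show ?thesis using True gg_nonneg[of "real p / 2" x] by simp
  qed
next
  case False
  have "\<bar>x\<bar> ^ p = \<bar>x\<bar> powr (2 * (real p / 2))" using False by (simp add: powr_realpow)
  also have "\<dots> = (\<bar>x\<bar> powr 2) powr (real p / 2)" by (rule powr_powr[symmetric])
  also have "\<dots> \<le> gg (real p / 2) x"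
    unfolding gg_def using False by (intro powr_mono2) (auto simp: w_def)
  finally show ?thesis .
qed

theorem proposition2:
  fixes n :: nat and a :: "nat \<Rightarrow> real" and \<mu> :: "real \<Rightarrow> real measure" and p :: nat
  assumes n: "n \<ge> 1"
    and prob: "\<And>t. t \<ge> 0 \<Longrightarrow> prob_space (\<mu> t)"
    and borel: "\<And>t. t \<ge> 0 \<Longrightarrow> sets (\<mu> t) = sets borel"
    and eq: "\<And>f t. smooth_compact f \<Longrightarrow> t \<ge> 0 \<Longrightarrow>
       ((\<lambda>s. \<integral>x. f x \<partial>\<mu> s) has_real_derivative
          (1/2 * (\<integral>z. dq_kernel f (fst z) (snd z) \<partial>(\<mu> t \<Otimes>\<^sub>M \<mu> t))
           - (\<integral>x. deriv (V n a) x * deriv f x \<partial>\<mu> t))) (at t within {0..})"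
    and p: "p \<ge> 2"
    and moments: "\<And>t. t \<ge> 0 \<Longrightarrow> integrable (\<mu> t) (\<lambda>x. \<bar>x\<bar> ^ (2*n + p - 2))"
  shows "\<exists>M>0. \<forall>t\<ge>0. (\<integral>x. \<bar>x\<bar> ^ p \<partial>\<mu> t) \<le> M"
proof -
  interpret fp_setup n a \<mu>
    by (rule fp_setup.intro[OF n prob borel eq])
  define N where "N = 2*n + p - 2"
  have pN: "p \<le> N" using n by (simp add: N_def)
  have intgq: "integrable (\<mu> u) (gg (real q / 2))" if q: "q \<le> p" and u: "u \<ge> 0" for q u
  proof (rule Bochner_Integration.integrable_bound)
    show "integrable (\<mu> u) (\<lambda>x. 2 powr (real q / 2) * (1 + \<bar>x\<bar> ^ N))"
    proof -
      interpret prob_space "\<mu> u" using prob u .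
      have "integrable (\<mu> u) (\<lambda>x. \<bar>x\<bar> ^ N)" using moments[OF u] unfolding N_def .
      moreover have "integrable (\<mu> u) (\<lambda>x. 1)" by simp
      ultimately have "integrable (\<mu> u) (\<lambda>x. 1 + \<bar>x\<bar> ^ N)" by (rule Bochner_Integration.integrable_add[rotated])
      then show ?thesis by (rule integrable_mult_right)
    qed
    show "gg (real q / 2) \<in> borel_measurable (\<mu> u)" by (rule meas[OF cont_gg u])
    show "AE x in \<mu> u. norm (gg (real q / 2) x) \<le> norm (2 powr (real q / 2) * (1 + \<bar>x\<bar> ^ N))"
      using gg_le_moment[of q N] q pN gg_nonneg by (intro AE_I2) auto
  qed
  define S where "S q \<longleftrightarrow> (\<exists>M. \<forall>t\<ge>0. (\<integral>x. gg (real q / 2) x \<partial>\<mu> t) \<le> M)" for q :: nat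
  have S0: "S 0"
  proof -
    have "(\<integral>x. gg (real 0 / 2) x \<partial>\<mu> t) \<le> 1" if "t \<ge> 0" for t
    proof -
      interpret prob_space "\<mu> t" using prob that .
      have "gg (real 0 / 2) = (\<lambda>x. 1)"
      proof
        fix x show "gg (real 0 / 2) x = 1" using w_pos[of x] by (simp add: gg_def)
      qed
      then show ?thesis by (simp add: prob_space)
    qed
    then show ?thesis unfolding S_def by blast
  qed
  have Sstep: "S q" if q: "2 \<le> q" "q \<le> p" and IH: "S (q - 2)" for q
  proof -
    have r: "real q / 2 \<ge> 1" using q by simp
    have e: "real q / 2 - 1 = real (q - 2) / 2" using q by (simp add: of_nat_diff field_simps)
    show ?thesis unfolding S_def
    proof (rule step[OF r])
      show "\<And>u. u \<ge> 0 \<Longrightarrow> integrable (\<mu> u) (gg (real q / 2))" using intgq q by blast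
      show "\<exists>M'. \<forall>u\<ge>0. (\<integral>x. gg (real q / 2 - 1) x \<partial>\<mu> u) \<le> M'" using IH unfolding S_def e .
    qed
  qed
  have S2: "S 2" using Sstep[of 2] S0 p by simp
  have S1: "S 1"
  proof -
    obtain M where M: "\<And>t. t \<ge> 0 \<Longrightarrow> (\<integral>x. gg (real 2 / 2) x \<partial>\<mu> t) \<le> M" using S2 unfolding S_def by blast
    have "(\<integral>x. gg (real 1 / 2) x \<partial>\<mu> t) \<le> M" if t: "t \<ge> 0" for t
    proof -
      have "(\<integral>x. gg (real 1 / 2) x \<partial>\<mu> t) \<le> (\<integral>x. gg (real 2 / 2) x \<partial>\<mu> t)"
      proof (rule integral_mono)
        show "integrable (\<mu> t) (gg (real 1 / 2))" using intgq[of 1 t] p t by simp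
        show "integrable (\<mu> t) (gg (real 2 / 2))" using intgq[of 2 t] p t by simp
        fix x show "gg (real 1 / 2) x \<le> gg (real 2 / 2) x"
          unfolding gg_def using w_ge1[of x] by (intro powr_mono) auto
      qed
      then show ?thesis using M[OF t] by simp
    qed
    then show ?thesis unfolding S_def by blast
  qed
  have Sall: "q \<le> p \<Longrightarrow> S q" for q
  proof (induction q rule: less_induct)
    case (less q)
    show ?case
    proof (cases "q < 2")
      case True
      then have "q = 0 \<or> q = 1" by auto
      then show ?thesis using S0 S1 by auto
    next
      case False
      then show ?thesis using Sstep[of q] less by simp
    qed
  qed
  obtain M where M: "\<And>t. t \<ge> 0 \<Longrightarrow> (\<integral>x. gg (real p / 2) x \<partial>\<mu> t) \<le> M"
    using Sall[of p] unfolding S_def by blast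
  have "(\<integral>x. \<bar>x\<bar> ^ p \<partial>\<mu> t) \<le> max M 1" if t: "t \<ge> 0" for t
  proof -
    have ip: "integrable (\<mu> t) (\<lambda>x. \<bar>x\<bar> ^ p)"
    proof (rule Bochner_Integration.integrable_bound[OF intgq[of p t]])
      show "(\<lambda>x. \<bar>x\<bar> ^ p) \<in> borel_measurable (\<mu> t)" by (rule meas[OF _ t]) (intro continuous_intros)
      show "AE x in \<mu> t. norm (\<bar>x\<bar> ^ p) \<le> norm (gg (real p / 2) x)"
        using abs_pow_le_gg gg_nonneg by (intro AE_I2) auto
    qed (use t in auto)
    have "(\<integral>x. \<bar>x\<bar> ^ p \<partial>\<mu> t) \<le> (\<integral>x. gg (real p / 2) x \<partial>\<mu> t)"
      using ip intgq[of p t] t abs_pow_le_gg by (intro integral_mono) auto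
    then show ?thesis using M[OF t] by simp
  qed
  then show ?thesis by (intro exI[of _ "max M 1"]) auto
qed

end
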